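(* Let $n\ge3$, $\beta>0$, $\gamma>1$ with $\beta\gamma<n$, $p,q>0$ with $q\ge p$ and $pq>(\gamma-1)^2$, $\sigma_1,\sigma_2\in(-\beta\gamma,\infty)$ with $\sigma_1\le\sigma_2$, $c_1,c_2$ double bounded, and assume $$q_0+p_0\le\frac{n-\beta\gamma}{\gamma-1}.$$ Let $(u,v)$ be a bounded and decaying positive solution of the system $u(x)=c_1(x)W_{\beta,\gamma}(|y|^{\sigma_1}v^q)(x)$, $v(x)=c_2(x)W_{\beta,\gamma}(|y|^{\sigma_2}u^p)(x)$. Then $(u,v)$ is an optimal integrable solution if and only if $(u,v)$ decays with the fast rates as $|x|\to\infty$.
   Context: For $f\ge 0$, $f\in L^1_{loc}(\mathbb{R}^n)$, the Wolff potential is $W_{\beta,\gamma}(f)(x)=\int_0^\infty\Big(\frac{\int_{B_t(x)}f(y)\,dy}{t^{n-\beta\gamma}}\Big)^{\frac{1}{\gamma-1}}\frac{dt}{t}$. A function $c$ is double bounded if $1/C\le c(x)\le C$ for some $C>0$ and all $x$. A solution is a pair of nonnegative $u,v\in L^1_{loc}(\mathbb{R}^n)$ satisfying both equations a.e.; positive if $u,v>0$. For positive $f$, $f(x)\simeq g(x)$ means $1/c\le f(x)/g(x)\le c$ for some $c>0$ and all sufficiently large $|x|$. A positive solution is decaying if $u(x)\simeq|x|^{-\theta_1}$, $v(x)\simeq|x|^{-\theta_2}$ for some $\theta_1,\theta_2>0$. $q_0=\frac{\beta\gamma(\gamma-1+q)+(\gamma-1)\sigma_1+\sigma_2 q}{pq-(\gamma-1)^2}$,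 $p_0=\frac{\beta\gamma(\gamma-1+p)+(\gamma-1)\sigma_2+\sigma_1 p}{pq-(\gamma-1)^2}$. $(u,v)$ is an optimal integrable solution if $(u,v)\in L^r(\mathbb{R}^n)\times L^s(\mathbb{R}^n)$ for all $r,s$ with $r>\frac{n(\gamma-1)}{n-\beta\gamma}$ and $s>\max\big\{\frac{n(\gamma-1)}{n-\beta\gamma},\frac{n(\gamma-1)}{p\frac{n-\beta\gamma}{\gamma-1}-(\beta\gamma+\sigma_2)}\big\}$. $(u,v)$ decays with the fast rates if $u(x)\simeq|x|^{-\frac{n-\beta\gamma}{\gamma-1}}$ and $v(x)\simeq|x|^{-\frac{n-\beta\gamma}{\gamma-1}}$ if $p\frac{n-\beta\gamma}{\gamma-1}-\sigma_2>n$; $v(x)\simeq|x|^{-\frac{n-\beta\gamma}{\gamma-1}}(\ln|x|)^{\frac{1}{\gamma-1}}$ if $p\frac{n-\beta\gamma}{\gamma-1}-\sigma_2=n$; $v(x)\simeq|x|^{-\frac{p\frac{n-\beta\gamma}{\gamma-1}-(\beta\gamma+\sigma_2)}{\gamma-1}}$ if $p\frac{n-\beta\gamma}{\gamma-1}-\sigma_2<n$. *)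

theory Defs
  imports "HOL-Analysis.Analysis"
begin

text \<open>Euclidean space R^n is modelled as real^'n, with n = CARD('n).\<close>

definition wolff :: "real \<Rightarrow> real \<Rightarrow> (real^'n::finite \<Rightarrow> real) \<Rightarrow> real^'n \<Rightarrow> ennreal" where
  "wolff \<beta> \<gamma> f x =
     (\<integral>\<^sup>+ t \<in> {0<..}.
        (let I = (\<integral>\<^sup>+ y \<in> ball x t. ennreal (f y) \<partial>lborel) in
         if I = \<infinity> then \<infinity>
         else ennreal ((enn2real I / t powr (real CARD('n) - \<beta> * \<gamma>)) powr (1 / (\<gamma> - 1)) / t))
      \<partial>lborel)"

definition double_bounded :: "('a \<Rightarrow> real) \<Rightarrow> bool" where
  "double_bounded c \<longleftrightarrow> (\<exists>C>0. \<forall>x. 1 / C \<le> c x \<and> c x \<le> C)"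

definition locally_integrable :: "(real^'n::finite \<Rightarrow> real) \<Rightarrow> bool" where
  "locally_integrable f \<longleftrightarrow> (\<forall>K. compact K \<longrightarrow> set_integrable lborel K f)"

definition asym_eq :: "(real^'n::finite \<Rightarrow> real) \<Rightarrow> (real^'n \<Rightarrow> real) \<Rightarrow> bool" where
  "asym_eq f g \<longleftrightarrow> (\<exists>c>0. \<exists>R. \<forall>x. norm x \<ge> R \<longrightarrow> 1 / c \<le> f x / g x \<and> f x / g x \<le> c)"

definition is_solution ::
  "real \<Rightarrow> real \<Rightarrow> real \<Rightarrow> real \<Rightarrow> real \<Rightarrow> real \<Rightarrow> (real^'n::finite \<Rightarrow> real) \<Rightarrow> (real^'n \<Rightarrow> real)
   \<Rightarrow> (real^'n \<Rightarrow> real) \<Rightarrow> (real^'n \<Rightarrow> real) \<Rightarrow> bool" where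
  "is_solution \<beta> \<gamma> p q \<sigma>1 \<sigma>2 c1 c2 u v \<longleftrightarrow>
     (\<forall>x. u x \<ge> 0) \<and> (\<forall>x. v x \<ge> 0) \<and> locally_integrable u \<and> locally_integrable v \<and>
     (AE x in lborel. ennreal (u x) = ennreal (c1 x) * wolff \<beta> \<gamma> (\<lambda>y. norm y powr \<sigma>1 * v y powr q) x) \<and>
     (AE x in lborel. ennreal (v x) = ennreal (c2 x) * wolff \<beta> \<gamma> (\<lambda>y. norm y powr \<sigma>2 * u y powr p) x)"

definition decaying :: "(real^'n::finite \<Rightarrow> real) \<Rightarrow> (real^'n \<Rightarrow> real) \<Rightarrow> bool" where
  "decaying u v \<longleftrightarrow> (\<forall>x. u x > 0) \<and> (\<forall>x. v x > 0) \<and>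
     (\<exists>\<theta>1>0. \<exists>\<theta>2>0. asym_eq u (\<lambda>x. norm x powr (-\<theta>1)) \<and> asym_eq v (\<lambda>x. norm x powr (-\<theta>2)))"

definition q0 :: "real \<Rightarrow> real \<Rightarrow> real \<Rightarrow> real \<Rightarrow> real \<Rightarrow> real \<Rightarrow> real" where
  "q0 \<beta> \<gamma> p q \<sigma>1 \<sigma>2 =
     (\<beta> * \<gamma> * (\<gamma> - 1 + q) + (\<gamma> - 1) * \<sigma>1 + \<sigma>2 * q) / (p * q - (\<gamma> - 1)\<^sup>2)"

definition p0 :: "real \<Rightarrow> real \<Rightarrow> real \<Rightarrow> real \<Rightarrow> real \<Rightarrow> real \<Rightarrow> real" where
  "p0 \<beta> \<gamma> p q \<sigma>1 \<sigma>2 =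
     (\<beta> * \<gamma> * (\<gamma> - 1 + p) + (\<gamma> - 1) * \<sigma>2 + \<sigma>1 * p) / (p * q - (\<gamma> - 1)\<^sup>2)"

definition optimal_integrable ::
  "real \<Rightarrow> real \<Rightarrow> real \<Rightarrow> real \<Rightarrow> (real^'n::finite \<Rightarrow> real) \<Rightarrow> (real^'n \<Rightarrow> real) \<Rightarrow> bool" where
  "optimal_integrable \<beta> \<gamma> p \<sigma>2 u v \<longleftrightarrow>
     (let n = real CARD('n) in
      (\<forall>r. r > n * (\<gamma> - 1) / (n - \<beta> * \<gamma>) \<longrightarrow> integrable lborel (\<lambda>x. \<bar>u x\<bar> powr r)) \<and>
      (\<forall>s. s > max (n * (\<gamma> - 1) / (n - \<beta> * \<gamma>))
                   (n * (\<gamma> - 1) / (p * ((n - \<beta> * \<gamma>) / (\<gamma> - 1)) - (\<beta> * \<gamma> + \<sigma>2)))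
           \<longrightarrow> integrable lborel (\<lambda>x. \<bar>v x\<bar> powr s)))"

definition fast_rates ::
  "real \<Rightarrow> real \<Rightarrow> real \<Rightarrow> real \<Rightarrow> (real^'n::finite \<Rightarrow> real) \<Rightarrow> (real^'n \<Rightarrow> real) \<Rightarrow> bool" where
  "fast_rates \<beta> \<gamma> p \<sigma>2 u v \<longleftrightarrow>
     (let n = real CARD('n); a = (n - \<beta> * \<gamma>) / (\<gamma> - 1) in
      asym_eq u (\<lambda>x. norm x powr (-a)) \<and>
      (p * a - \<sigma>2 > n \<longrightarrow> asym_eq v (\<lambda>x. norm x powr (-a))) \<and>
      (p * a - \<sigma>2 = n \<longrightarrow> asym_eq v (\<lambda>x. norm x powr (-a) * ln (norm x) powr (1 / (\<gamma> - 1)))) \<and>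
      (p * a - \<sigma>2 < n \<longrightarrow> asym_eq v (\<lambda>x. norm x powr (-((p * a - (\<beta> * \<gamma> + \<sigma>2)) / (\<gamma> - 1))))))"

end

theory Submission
  imports Defs "HOL-Real_Asymp.Real_Asymp"
begin


lemma nn_int_powr_tail:
  fixes T e :: real
  assumes "T > 0" "e > 0"
  shows "(\<integral>\<^sup>+t. ennreal (indicator {T..} t * t powr (-e-1)) \<partial>lborel) = ennreal (T powr (-e) / e)"
proof -
  have "((\<lambda>t. t powr (-e-1)) has_integral -(T powr (-e-1+1)) / (-e-1+1)) {T..}"
    using assms by (intro has_integral_powr_to_inf) auto
  hence h: "((\<lambda>t. t powr (-e-1)) has_integral (T powr (-e) / e)) {T..}" by simp
  have "integral\<^sup>N lborel (\<lambda>t. indicator {T..} t * t powr (-e-1)) = T powr (-e) / e"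
    by (rule nn_integral_has_integral_lebesgue[OF _ h]) auto
  thus ?thesis by simp
qed



lemma wolff_lower:
  fixes f :: "real^'n::finite \<Rightarrow> real" and x :: "real^'n"
  assumes g: "\<gamma> > 1" and C: "C > 0" and T: "T > 0"
    and e: "e = (real CARD('n) - \<beta> * \<gamma> - d) / (\<gamma> - 1)" and epos: "e > 0"
    and I: "\<And>t. t \<ge> T \<Longrightarrow> ennreal (C * t powr d) \<le> (\<integral>\<^sup>+y\<in>ball x t. ennreal (f y) \<partial>lborel)"
  shows "ennreal (C powr (1/(\<gamma>-1)) * (T powr (-e) / e)) \<le> wolff \<beta> \<gamma> f x"
proof -
  define K where "K = C powr (1/(\<gamma>-1))"
  have Kpos: "K > 0" using C by (simp add: K_def)
  have pt: "ennreal (indicator {T..} t * (K * t powr (-e-1))) \<le>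
     (let I = (\<integral>\<^sup>+ y \<in> ball x t. ennreal (f y) \<partial>lborel) in
         if I = \<infinity> then \<infinity>
         else ennreal ((enn2real I / t powr (real CARD('n) - \<beta> * \<gamma>)) powr (1 / (\<gamma> - 1)) / t)) * indicator {0<..} t" for t
  proof (cases "t \<ge> T")
    case False thus ?thesis by simp
  next
    case True
    hence t0: "t > 0" using T by simp
    define J where "J = (\<integral>\<^sup>+ y \<in> ball x t. ennreal (f y) \<partial>lborel)"
    have CJ: "ennreal (C * t powr d) \<le> J" using I[OF True] by (simp add: J_def)
    show ?thesis
    proof (cases "J = \<infinity>")
      case True thus ?thesis using t0 by (simp add: J_def[symmetric] Let_def)
    next
      case False
      have le: "C * t powr d \<le> enn2real J"
      proof -
        have "J = ennreal (enn2real J)" using False by (simp add: less_top)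
        hence "ennreal (C * t powr d) \<le> ennreal (enn2real J)" using CJ by simp
        thus ?thesis by (subst (asm) ennreal_le_iff) auto
      qed
      have "K * t powr (-e-1) = (C * t powr d / t powr (real CARD('n) - \<beta> * \<gamma>)) powr (1 / (\<gamma> - 1)) / t"
      proof -
        have "(C * t powr d / t powr (real CARD('n) - \<beta> * \<gamma>)) = C * t powr (d - (real CARD('n) - \<beta> * \<gamma>))"
          using t0 by (simp add: powr_diff)
        also have "\<dots> powr (1 / (\<gamma> - 1)) = K * t powr (-e)"
        proof -
          have ex: "(d - (real CARD('n) - \<beta> * \<gamma>)) / (\<gamma> - 1) = -e"
            using g by (simp add: e field_simps)
          show ?thesis using t0 C g unfolding K_def
            by (simp add: powr_mult powr_powr ex)
        qed
        finally show ?thesis using t0 by (simp add: powr_diff powr_minus divide_simps powr_add)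
      qed
      also have "\<dots> \<le> (enn2real J / t powr (real CARD('n) - \<beta> * \<gamma>)) powr (1 / (\<gamma> - 1)) / t"
        using le t0 C g
        by (intro divide_right_mono powr_mono2 divide_right_mono) auto
      finally show ?thesis using True t0 False by (simp add: J_def[symmetric] Let_def)
    qed
  qed
  have "ennreal (K * (T powr (-e) / e)) = (\<integral>\<^sup>+t. ennreal (indicator {T..} t * (K * t powr (-e-1))) \<partial>lborel)"
  proof -
    have "(\<integral>\<^sup>+t. ennreal (indicator {T..} t * (K * t powr (-e-1))) \<partial>lborel)
        = (\<integral>\<^sup>+t. ennreal K * ennreal (indicator {T..} t * t powr (-e-1)) \<partial>lborel)"
      using Kpos by (intro nn_integral_cong) (simp add: ennreal_mult'[symmetric] mult.assoc mult.left_commute)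
    also have "\<dots> = ennreal K * ennreal (T powr (-e) / e)"
      by (subst nn_integral_cmult) (auto simp: nn_int_powr_tail[OF T epos])
    also have "\<dots> = ennreal (K * (T powr (-e) / e))"
      using Kpos T epos by (subst ennreal_mult) auto
    finally show ?thesis by simp
  qed
  also have "\<dots> \<le> wolff \<beta> \<gamma> f x"
    unfolding wolff_def by (intro nn_integral_mono pt)
  finally show ?thesis by (simp add: K_def)
qed



abbreviation "omg TYPE('n::finite) \<equiv> unit_ball_vol (real CARD('n))"

lemma omg_pos: "omg TYPE('n::finite) > 0" by simp

lemma ball_meas:
  assumes "r \<ge> 0"
  shows "emeasure lborel (ball (0::real^'n::finite) r) = ennreal (omg TYPE('n) * r ^ CARD('n))"
  using emeasure_ball[OF assms, where c="0::real^'n"] by simp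

lemma shell_meas:
  assumes "0 \<le> r" "r \<le> r'"
  shows "emeasure lborel (ball (0::real^'n::finite) r' - ball 0 r) = ennreal (omg TYPE('n) * (r' ^ CARD('n) - r ^ CARD('n)))"
proof -
  have "emeasure lborel (ball (0::real^'n) r' - ball 0 r) = emeasure lborel (ball (0::real^'n) r') - emeasure lborel (ball (0::real^'n) r)"
    using assms by (intro emeasure_Diff) (auto simp: ball_meas)
  also have "\<dots> = ennreal (omg TYPE('n) * (r' ^ CARD('n) - r ^ CARD('n)))"
    using assms by (simp add: ball_meas ennreal_minus right_diff_distrib)
  finally show ?thesis .
qed

lemma shell_low:
  fixes g :: "real^'n::finite \<Rightarrow> real"
  assumes "0 \<le> r" "r \<le> r'" "m \<ge> 0"
    and "\<And>y. r \<le> norm y \<Longrightarrow> norm y < r' \<Longrightarrow> m \<le> g y"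
  shows "ennreal (m * (omg TYPE('n) * (r' ^ CARD('n) - r ^ CARD('n)))) \<le> (\<integral>\<^sup>+y\<in>ball 0 r' - ball 0 r. ennreal (g y) \<partial>lborel)"
proof -
  have "ennreal (m * (omg TYPE('n) * (r' ^ CARD('n) - r ^ CARD('n)))) = ennreal m * emeasure lborel (ball (0::real^'n) r' - ball 0 r)"
    using assms by (simp add: shell_meas ennreal_mult)
  also have "\<dots> = (\<integral>\<^sup>+y. ennreal m * indicator (ball (0::real^'n) r' - ball 0 r) y \<partial>lborel)"
    by (rule nn_integral_cmult_indicator[symmetric]) auto
  also have "\<dots> \<le> (\<integral>\<^sup>+y\<in>ball 0 r' - ball 0 r. ennreal (g y) \<partial>lborel)"
    using assms(4) by (intro nn_integral_mono) (auto split: split_indicator simp: dist_norm not_less intro!: ennreal_leI)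
  finally show ?thesis .
qed

lemma shell_up:
  fixes g :: "real^'n::finite \<Rightarrow> real"
  assumes "0 \<le> r" "r \<le> r'" "M \<ge> 0"
    and "\<And>y. r \<le> norm y \<Longrightarrow> norm y < r' \<Longrightarrow> g y \<le> M"
  shows "(\<integral>\<^sup>+y\<in>ball 0 r' - ball 0 r. ennreal (g y) \<partial>lborel) \<le> ennreal (M * (omg TYPE('n) * r' ^ CARD('n)))"
proof -
  have "(\<integral>\<^sup>+y\<in>ball 0 r' - ball 0 r. ennreal (g y) \<partial>lborel) \<le> (\<integral>\<^sup>+y. ennreal M * indicator (ball (0::real^'n) r') y \<partial>lborel)"
    using assms(4) by (intro nn_integral_mono) (auto split: split_indicator simp: dist_norm not_less intro!: ennreal_leI)
  also have "\<dots> = ennreal M * emeasure lborel (ball (0::real^'n) r')"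
    by (rule nn_integral_cmult_indicator) auto
  also have "\<dots> = ennreal (M * (omg TYPE('n) * r' ^ CARD('n)))"
    using assms by (simp add: ball_meas ennreal_mult)
  finally show ?thesis .
qed

lemma shell_sum:
  fixes g :: "real^'n::finite \<Rightarrow> ennreal"
  assumes g[measurable]: "g \<in> borel_measurable borel" and R: "R > 0"
  shows "(\<integral>\<^sup>+y\<in>ball 0 (2^N*R) - ball 0 R. g y \<partial>lborel) =
         (\<Sum>j<N. \<integral>\<^sup>+y\<in>ball 0 (2^Suc j*R) - ball 0 (2^j*R). g y \<partial>lborel)"
proof (induction N)
  case 0
  thus ?case by simp
next
  case (Suc N)
  have sub: "ball (0::real^'n) (2^N*R) \<subseteq> ball 0 (2^Suc N*R)"
    using R by (intro subset_ball) auto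
  have sub2: "ball (0::real^'n) R \<subseteq> ball 0 (2^N*R)"
    using R by (intro subset_ball) auto
  have eq: "ball (0::real^'n) (2^Suc N*R) - ball 0 R =
     (ball 0 (2^N*R) - ball 0 R) \<union> (ball 0 (2^Suc N*R) - ball 0 (2^N*R))"
    using sub sub2 by blast
  have "(\<integral>\<^sup>+y\<in>ball 0 (2^Suc N*R) - ball 0 R. g y \<partial>lborel) =
     (\<integral>\<^sup>+y\<in>ball 0 (2^N*R) - ball 0 R. g y \<partial>lborel) + (\<integral>\<^sup>+y\<in>ball 0 (2^Suc N*R) - ball 0 (2^N*R). g y \<partial>lborel)"
    unfolding eq by (rule nn_integral_disjoint_pair) auto
  thus ?case using Suc by simp
qed

lemma AE_ex:
  assumes "AE x in lborel. P x" "S \<in> sets lborel" "emeasure lborel S > 0"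
  shows "\<exists>x\<in>S. P x"
proof (rule ccontr)
  assume "\<not> ?thesis"
  from assms(1) obtain N where N: "{x \<in> space lborel. \<not> P x} \<subseteq> N" "emeasure lborel N = 0" "N \<in> sets lborel"
    by (rule AE_E)
  have "S \<subseteq> N" using N(1) \<open>\<not> (\<exists>x\<in>S. P x)\<close> by auto
  hence "emeasure lborel S \<le> emeasure lborel N" using N(3) by (intro emeasure_mono)
  thus False using N(2) assms(3) by simp
qed

lemma shell_pos:
  assumes "0 \<le> r" "r < r'"
  shows "emeasure lborel (ball (0::real^'n::finite) r' - ball 0 r) > 0"
proof -
  have "r ^ CARD('n) < r' ^ CARD('n)" using assms by (intro power_strict_mono) auto
  thus ?thesis using assms by (simp add: shell_meas)
qed

lemma AE_large:
  assumes "AE x in lborel. P (x::real^'n::finite)"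
  shows "\<exists>x. norm x \<ge> \<rho> \<and> P x"
proof -
  define r where "r = max \<rho> 1"
  have "\<exists>x\<in>ball (0::real^'n) (2*r) - ball 0 r. P x"
    by (rule AE_ex[OF assms]) (auto intro!: shell_pos simp: r_def)
  then obtain x where "P x" "\<not> norm x < max \<rho> 1" by (auto simp: r_def dist_norm)
  thus ?thesis by (intro exI[of _ x]) auto
qed



lemma shell_term_low:
  fixes R k c :: real and j :: nat
  assumes R: "R > 0" and c: "c > 0" and k: "0 \<le> k" "k \<le> real CARD('n::finite)"
  shows "c * (omg TYPE('n) * (2 * R) powr (-k) * R ^ CARD('n) * (2 ^ CARD('n) - 1))
     \<le> c * (2^Suc j * R) powr (-k) * (omg TYPE('n) * ((2^Suc j * R) ^ CARD('n) - (2^j * R) ^ CARD('n)))"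
proof -
  define A :: real where "A = 2^j"
  have A: "A \<ge> 1" by (simp add: A_def)
  have e1: "(2^Suc j * R) powr (-k) = A powr (-k) * (2*R) powr (-k)"
    using R A by (simp add: A_def powr_mult[symmetric] mult_ac)
  have e2: "((2^Suc j * R) ^ CARD('n) - (2^j * R) ^ CARD('n)) = A ^ CARD('n) * (R ^ CARD('n) * (2 ^ CARD('n) - 1))"
    by (simp add: A_def power_mult_distrib algebra_simps)
  have e3: "A powr (-k) * A ^ CARD('n) = A powr (real CARD('n) - k)"
    using A by (simp add: powr_realpow[symmetric] powr_add[symmetric])
  have ge: "A powr (real CARD('n) - k) \<ge> 1" using A k by (intro ge_one_powr_ge_zero) auto
  have pos: "0 \<le> c * (omg TYPE('n) * (2 * R) powr (-k) * R ^ CARD('n) * (2 ^ CARD('n) - 1))"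
    using c R by (intro mult_nonneg_nonneg) (auto simp: one_le_power)
  have eqn: "c * (2^Suc j * R) powr (-k) * (omg TYPE('n) * ((2^Suc j * R) ^ CARD('n) - (2^j * R) ^ CARD('n)))
      = (c * (omg TYPE('n) * (2 * R) powr (-k) * R ^ CARD('n) * (2 ^ CARD('n) - 1))) * (A powr (-k) * A ^ CARD('n))"
    unfolding e1 e2 by (simp add: mult_ac)
  also have "\<dots> = (c * (omg TYPE('n) * (2 * R) powr (-k) * R ^ CARD('n) * (2 ^ CARD('n) - 1))) * A powr (real CARD('n) - k)"
    by (simp add: e3)
  finally have eqn': "c * (2^Suc j * R) powr (-k) * (omg TYPE('n) * ((2^Suc j * R) ^ CARD('n) - (2^j * R) ^ CARD('n)))
      = (c * (omg TYPE('n) * (2 * R) powr (-k) * R ^ CARD('n) * (2 ^ CARD('n) - 1))) * A powr (real CARD('n) - k)" .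
  show ?thesis unfolding eqn' using mult_left_mono[OF ge pos] by (metis mult_1_right)
qed

lemma shells_lower:
  fixes g :: "real^'n::finite \<Rightarrow> real"
  assumes g: "g \<in> borel_measurable borel" and R: "R > 0" and c: "c > 0"
    and k: "0 \<le> k" "k \<le> real CARD('n)"
    and low: "\<And>y. R \<le> norm y \<Longrightarrow> c * norm y powr (-k) \<le> g y"
  shows "ennreal (real N * (c * (omg TYPE('n) * (2 * R) powr (-k) * R ^ CARD('n) * (2 ^ CARD('n) - 1))))
     \<le> (\<integral>\<^sup>+y\<in>ball 0 (2^N*R) - ball 0 R. ennreal (g y) \<partial>lborel)"
proof -
  define \<delta> where "\<delta> = c * (omg TYPE('n) * (2 * R) powr (-k) * R ^ CARD('n) * (2 ^ CARD('n) - 1))"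
  have dpos: "\<delta> \<ge> 0" unfolding \<delta>_def using c R by (intro mult_nonneg_nonneg) (auto simp: one_le_power)
  have each: "ennreal \<delta> \<le> (\<integral>\<^sup>+y\<in>ball 0 (2^Suc j*R) - ball 0 (2^j*R). ennreal (g y) \<partial>lborel)" for j
  proof -
    have "ennreal \<delta> \<le> ennreal (c * (2^Suc j * R) powr (-k) * (omg TYPE('n) * ((2^Suc j * R) ^ CARD('n) - (2^j * R) ^ CARD('n))))"
      unfolding \<delta>_def by (intro ennreal_leI shell_term_low R c k)
    also have "\<dots> \<le> (\<integral>\<^sup>+y\<in>ball 0 (2^Suc j*R) - ball 0 (2^j*R). ennreal (g y) \<partial>lborel)"
    proof (rule shell_low)
      fix y :: "real^'n" assume y: "2^j*R \<le> norm y" "norm y < 2^Suc j*R"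
      have "R \<le> norm y" using y R by (smt (verit) mult_le_cancel_right1 one_le_power)
      hence "c * norm y powr (-k) \<le> g y" by (rule low)
      moreover have "(2^Suc j * R) powr (-k) \<le> norm y powr (-k)"
      proof -
        have "0 < 2^j*R" using R by simp
        hence "0 < norm y" using y by linarith
        thus ?thesis using y R k by (intro powr_mono2') auto
      qed
      ultimately show "c * (2^Suc j * R) powr (-k) \<le> g y" using c
        by (smt (verit) mult_left_mono)
    qed (use R c in auto)
    finally show ?thesis .
  qed
  have "ennreal (real N * \<delta>) = (\<Sum>j<N. ennreal \<delta>)" using dpos by (simp add: ennreal_mult ennreal_of_nat_eq_real_of_nat)
  also have "\<dots> \<le> (\<Sum>j<N. \<integral>\<^sup>+y\<in>ball 0 (2^Suc j*R) - ball 0 (2^j*R). ennreal (g y) \<partial>lborel)"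
    by (intro sum_mono each)
  also have "\<dots> = (\<integral>\<^sup>+y\<in>ball 0 (2^N*R) - ball 0 R. ennreal (g y) \<partial>lborel)"
    by (rule shell_sum[symmetric]) (use g R in auto)
  finally show ?thesis by (simp add: \<delta>_def)
qed



lemma shell_term_up:
  fixes R k C :: real and j :: nat
  assumes R: "R > 0" and k: "0 \<le> k"
  shows "C * (2^j*R) powr (-k) * (omg TYPE('n::finite) * (2^Suc j*R) ^ CARD('n))
       = (C * omg TYPE('n) * (2*R) ^ CARD('n) * R powr (-k)) * (2 powr (real CARD('n) - k)) ^ j"
proof -
  define A :: real where "A = 2^j"
  have A: "A \<ge> 1" by (simp add: A_def)
  have e1: "(2^j*R) powr (-k) = A powr (-k) * R powr (-k)"
    using R A by (simp add: A_def powr_mult)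
  have e2: "(2^Suc j*R) ^ CARD('n) = A ^ CARD('n) * (2*R) ^ CARD('n)"
    by (simp add: A_def power_mult_distrib algebra_simps)
  have e3: "A powr (-k) * A ^ CARD('n) = A powr (real CARD('n) - k)"
    using A by (simp add: powr_realpow[symmetric] powr_add[symmetric])
  have e4: "A powr (real CARD('n) - k) = (2 powr (real CARD('n) - k)) ^ j"
  proof -
    have "A = 2 powr (real j)" by (simp add: A_def powr_realpow)
    hence "A powr (real CARD('n) - k) = 2 powr (real j * (real CARD('n) - k))" by (simp add: powr_powr)
    also have "\<dots> = (2 powr (real CARD('n) - k)) ^ j" by (simp add: powr_power)
    finally show ?thesis .
  qed
  have "C * (2^j*R) powr (-k) * (omg TYPE('n) * (2^Suc j*R) ^ CARD('n))
      = (C * omg TYPE('n) * (2*R) ^ CARD('n) * R powr (-k)) * (A powr (-k) * A ^ CARD('n))"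
    unfolding e1 e2 by (simp add: mult_ac)
  thus ?thesis by (simp add: e3 e4)
qed

lemma shells_upper:
  fixes g :: "real^'n::finite \<Rightarrow> real"
  assumes g: "g \<in> borel_measurable borel" and R: "R > 0" and C: "C \<ge> 0"
    and k: "k > real CARD('n)"
    and up: "\<And>y. R \<le> norm y \<Longrightarrow> g y \<le> C * norm y powr (-k)"
  shows "(\<integral>\<^sup>+y\<in>{y. R \<le> norm y}. ennreal (g y) \<partial>lborel)
      \<le> ennreal ((C * omg TYPE('n) * (2*R) ^ CARD('n) * R powr (-k)) / (1 - 2 powr (real CARD('n) - k)))"
proof -
  define K where "K = C * omg TYPE('n) * (2*R) ^ CARD('n) * R powr (-k)"
  define Q :: real where "Q = 2 powr (real CARD('n) - k)"
  have K: "K \<ge> 0" using C R by (simp add: K_def)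
  have Q0: "Q > 0" by (simp add: Q_def)
  have Q1: "Q < 1"
  proof -
    have "2 powr (real CARD('n) - k) < 2 powr 0" using k by (intro powr_less_mono) auto
    thus ?thesis by (simp add: Q_def)
  qed
  have k0: "k \<ge> 0" using k by linarith
  define f where "f N y = ennreal (g y) * indicator (ball 0 (2^N*R) - ball 0 R) y" for N y
  have fin: "(\<integral>\<^sup>+y. f N y \<partial>lborel) \<le> ennreal (K / (1 - Q))" for N
  proof -
    have each: "(\<integral>\<^sup>+y\<in>ball 0 (2^Suc j*R) - ball 0 (2^j*R). ennreal (g y) \<partial>lborel) \<le> ennreal (K * Q ^ j)" for j
    proof -
      have "(\<integral>\<^sup>+y\<in>ball 0 (2^Suc j*R) - ball 0 (2^j*R). ennreal (g y) \<partial>lborel)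
          \<le> ennreal ((C * (2^j*R) powr (-k)) * (omg TYPE('n) * (2^Suc j*R) ^ CARD('n)))"
      proof (rule shell_up)
        fix y :: "real^'n" assume y: "2^j*R \<le> norm y" "norm y < 2^Suc j*R"
        have "R \<le> norm y" using y R by (smt (verit) mult_le_cancel_right1 one_le_power)
        hence "g y \<le> C * norm y powr (-k)" by (rule up)
        moreover have "norm y powr (-k) \<le> (2^j * R) powr (-k)"
        proof -
          have "0 < 2^j*R" using R by simp
          thus ?thesis using y R k0 by (intro powr_mono2') auto
        qed
        ultimately show "g y \<le> C * (2^j * R) powr (-k)" using C
          by (smt (verit) mult_left_mono)
      qed (use R C in auto)
      also have "\<dots> = ennreal (K * Q ^ j)"
        using shell_term_up[OF R k0, of C j, where 'n='n] by (simp only: K_def Q_def mult.assoc)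
      finally show ?thesis .
    qed
    have "(\<integral>\<^sup>+y. f N y \<partial>lborel) = (\<integral>\<^sup>+y\<in>ball 0 (2^N*R) - ball 0 R. ennreal (g y) \<partial>lborel)"
      by (simp add: f_def)
    also have "\<dots> = (\<Sum>j<N. \<integral>\<^sup>+y\<in>ball 0 (2^Suc j*R) - ball 0 (2^j*R). ennreal (g y) \<partial>lborel)"
      by (rule shell_sum) (use g R in auto)
    also have "\<dots> \<le> (\<Sum>j<N. ennreal (K * Q ^ j))" by (intro sum_mono each)
    also have "\<dots> = ennreal (\<Sum>j<N. K * Q ^ j)"
      using K Q0 by (subst sum_ennreal) auto
    also have "(\<Sum>j<N. K * Q ^ j) = K * ((1 - Q ^ N) / (1 - Q))"
      using Q1 by (simp add: sum_distrib_left[symmetric] sum_gp_strict)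
    also have "\<dots> \<le> K / (1 - Q)"
    proof -
      have "(1 - Q ^ N) / (1 - Q) \<le> 1 / (1 - Q)"
        using Q0 Q1 by (intro divide_right_mono) auto
      thus ?thesis using K by (metis mult_left_mono times_divide_eq_right mult_1_right)
    qed
    finally show ?thesis by (simp add: ennreal_leI)
  qed
  have inc: "incseq f"
  proof (rule incseq_SucI, rule le_funI)
    fix N y
    have "ball (0::real^'n) (2^N*R) \<subseteq> ball 0 (2^Suc N*R)" using R by (intro subset_ball) auto
    thus "f N y \<le> f (Suc N) y" unfolding f_def by (auto split: split_indicator)
  qed
  have meas: "f N \<in> borel_measurable lborel" for N
    unfolding f_def using g by (intro borel_measurable_times_ennreal borel_measurable_indicator) auto
  have pt: "ennreal (g y) * indicator {y. R \<le> norm y} y \<le> (SUP N. f N y)" for y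
  proof (cases "R \<le> norm y")
    case False thus ?thesis by simp
  next
    case True
    obtain N where N: "norm y / R < 2 ^ N" using real_arch_pow[of 2 "norm y / R"] by auto
    have "norm y < 2^N * R" using N R by (simp add: field_simps)
    hence "f N y = ennreal (g y)" using True by (simp add: f_def dist_norm)
    hence "ennreal (g y) \<le> (SUP N. f N y)" by (metis SUP_upper UNIV_I)
    thus ?thesis using True by simp
  qed
  have "(\<integral>\<^sup>+y\<in>{y. R \<le> norm y}. ennreal (g y) \<partial>lborel) \<le> (\<integral>\<^sup>+y. (SUP N. f N y) \<partial>lborel)"
    by (intro nn_integral_mono pt)
  also have "\<dots> = (SUP N. \<integral>\<^sup>+y. f N y \<partial>lborel)"
    by (rule nn_integral_monotone_convergence_SUP[OF inc meas])
  also have "\<dots> \<le> ennreal (K / (1 - Q))" by (intro SUP_least fin)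
  finally show ?thesis by (simp add: K_def Q_def)
qed



lemma powr_bound_aux:
  fixes a C r s \<theta> :: real
  assumes "0 \<le> a" "a \<le> C * r powr (-\<theta>)" "r > 0" "s \<ge> 0" "C \<ge> 0"
  shows "a powr s \<le> C powr s * r powr (-(s*\<theta>))"
proof -
  have "a powr s \<le> (C * r powr (-\<theta>)) powr s" using assms by (intro powr_mono2) auto
  also have "\<dots> = C powr s * r powr (-(s*\<theta>))"
    using assms by (simp add: powr_mult powr_powr mult.commute)
  finally show ?thesis .
qed

lemma powr_bound_aux2:
  fixes a c r s \<theta> :: real
  assumes "c * r powr (-\<theta>) \<le> a" "r > 0" "s \<ge> 0" "c \<ge> 0"
  shows "c powr s * r powr (-(s*\<theta>)) \<le> a powr s"
proof -
  have "c powr s * r powr (-(s*\<theta>)) = (c * r powr (-\<theta>)) powr s"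
    using assms by (simp add: powr_mult powr_powr mult.commute)
  also have "\<dots> \<le> a powr s" using assms by (intro powr_mono2) auto
  finally show ?thesis .
qed

lemma nn_int_add_ind:
  fixes f g :: "real^'n::finite \<Rightarrow> ennreal"
  assumes "f \<in> borel_measurable lborel" "g \<in> borel_measurable lborel" "A \<in> sets lborel" "B \<in> sets lborel"
  shows "(\<integral>\<^sup>+x. f x * indicator A x + g x * indicator B x \<partial>lborel) = (\<integral>\<^sup>+x. f x * indicator A x \<partial>lborel) + (\<integral>\<^sup>+x. g x * indicator B x \<partial>lborel)"
  by (rule nn_integral_add) (use assms in auto)

lemma int_pos:
  fixes f :: "real^'n::finite \<Rightarrow> real"
  assumes f[measurable]: "f \<in> borel_measurable borel" and M: "\<And>x. \<bar>f x\<bar> \<le> M"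
    and R: "R > 0" and C: "C \<ge> 0"
    and up: "\<And>x. R \<le> norm x \<Longrightarrow> \<bar>f x\<bar> \<le> C * norm x powr (-\<theta>)"
    and s: "s > 0" and st: "s * \<theta> > real CARD('n)"
  shows "integrable lborel (\<lambda>x. \<bar>f x\<bar> powr s)"
proof (rule integrableI_bounded)
  show "(\<lambda>x. \<bar>f x\<bar> powr s) \<in> borel_measurable lborel" by measurable
  have M0: "M \<ge> 0" using M[of 0] by linarith
  define g where "g y = C powr s * norm y powr (-(s*\<theta>))" for y :: "real^'n"
  have gm[measurable]: "g \<in> borel_measurable borel" unfolding g_def by measurable
  have pt: "ennreal (norm (\<bar>f x\<bar> powr s)) \<le> ennreal (M powr s) * indicator (ball 0 R) x + ennreal (g x) * indicator {y. R \<le> norm y} x" for x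
  proof (cases "R \<le> norm x")
    case True
    have "\<bar>f x\<bar> powr s \<le> g x" unfolding g_def
      by (rule powr_bound_aux) (use True R s C up in auto)
    thus ?thesis using True by (auto simp: dist_norm intro!: ennreal_leI)
  next
    case False
    have "\<bar>f x\<bar> powr s \<le> M powr s" using M s by (intro powr_mono2) auto
    thus ?thesis using False by (auto simp: dist_norm intro!: ennreal_leI)
  qed
  have "(\<integral>\<^sup>+x. ennreal (norm (\<bar>f x\<bar> powr s)) \<partial>lborel) \<le>
     (\<integral>\<^sup>+x. ennreal (M powr s) * indicator (ball 0 R) x + ennreal (g x) * indicator {y. R \<le> norm y} x \<partial>lborel)"
    by (rule nn_integral_mono) (rule pt)
  also have "\<dots> = (\<integral>\<^sup>+x. ennreal (M powr s) * indicator (ball (0::real^'n) R) x \<partial>lborel) + (\<integral>\<^sup>+x\<in>{y. R \<le> norm y}. ennreal (g x) \<partial>lborel)"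
  proof (rule nn_int_add_ind)
    show "{y::real^'n. R \<le> norm y} \<in> sets lborel"
      using closed_Collect_le[of "\<lambda>y. R" "\<lambda>y::real^'n. norm y"] by (auto intro: borel_closed continuous_intros)
    show "(\<lambda>x. ennreal (g x)) \<in> borel_measurable lborel" using gm by auto
  qed auto
  finally have A12: "(\<integral>\<^sup>+x. ennreal (norm (\<bar>f x\<bar> powr s)) \<partial>lborel) \<le> (\<integral>\<^sup>+x. ennreal (M powr s) * indicator (ball (0::real^'n) R) x \<partial>lborel) + (\<integral>\<^sup>+x\<in>{y. R \<le> norm y}. ennreal (g x) \<partial>lborel)" .
  have "(\<integral>\<^sup>+x. ennreal (M powr s) * indicator (ball (0::real^'n) R) x \<partial>lborel) = ennreal (M powr s) * emeasure lborel (ball (0::real^'n) R)"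
    by (rule nn_integral_cmult_indicator) auto
  also have "\<dots> < \<infinity>" using R by (simp add: ball_meas ennreal_mult_less_top)
  finally have A3: "(\<integral>\<^sup>+x. ennreal (M powr s) * indicator (ball (0::real^'n) R) x \<partial>lborel) < \<infinity>" .
  have A4: "(\<integral>\<^sup>+x\<in>{y. R \<le> norm y}. ennreal (g x) \<partial>lborel) < \<infinity>"
  proof -
    have "(\<integral>\<^sup>+x\<in>{y. R \<le> norm y}. ennreal (g x) \<partial>lborel) \<le> ennreal ((C powr s * omg TYPE('n) * (2*R) ^ CARD('n) * R powr (-(s*\<theta>))) / (1 - 2 powr (real CARD('n) - s*\<theta>)))"
      by (rule shells_upper[OF gm R _ st]) (auto simp: g_def)
    also have "\<dots> < \<infinity>" by simp
    finally show ?thesis .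
  qed
  show "(\<integral>\<^sup>+x. ennreal (norm (\<bar>f x\<bar> powr s)) \<partial>lborel) < \<infinity>"
    using A12 A3 A4 by (simp add: ennreal_add_less_top order.strict_trans1 del: norm_powr_real_powr)
qed

lemma nonint:
  fixes f :: "real^'n::finite \<Rightarrow> real"
  assumes f[measurable]: "f \<in> borel_measurable borel"
    and R: "R > 0" and c: "c > 0"
    and low: "\<And>x. R \<le> norm x \<Longrightarrow> c * norm x powr (-\<theta>) \<le> f x"
    and s: "s > 0" and th: "\<theta> \<ge> 0" and st: "s * \<theta> \<le> real CARD('n)"
  shows "\<not> integrable lborel (\<lambda>x. \<bar>f x\<bar> powr s)"
proof
  assume int: "integrable lborel (\<lambda>x. \<bar>f x\<bar> powr s)"
  define g where "g x = \<bar>f x\<bar> powr s" for x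
  have gm: "g \<in> borel_measurable borel" unfolding g_def by measurable
  have fin: "(\<integral>\<^sup>+x. ennreal (g x) \<partial>lborel) \<noteq> \<infinity>" using integrableD(2)[OF int] by (simp add: g_def)
  then obtain X where X: "(\<integral>\<^sup>+x. ennreal (g x) \<partial>lborel) = ennreal X" "X \<ge> 0"
    using ennreal_cases[of "\<integral>\<^sup>+x. ennreal (g x) \<partial>lborel"] by auto
  define \<delta> where "\<delta> = c powr s * (omg TYPE('n) * (2 * R) powr (-(s*\<theta>)) * R ^ CARD('n) * (2 ^ CARD('n) - 1))"
  have "(2::real) ^ CARD('n) \<ge> 2 ^ 1" by (intro power_increasing) auto
  hence d: "\<delta> > 0" unfolding \<delta>_def using c R by (intro mult_pos_pos) auto
  have "ennreal (real N * \<delta>) \<le> ennreal X" for N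
  proof -
    have "ennreal (real N * \<delta>) \<le> (\<integral>\<^sup>+y\<in>ball 0 (2^N*R) - ball 0 R. ennreal (g y) \<partial>lborel)"
      unfolding \<delta>_def
    proof (rule shells_lower[OF gm R])
      fix y :: "real^'n" assume y: "R \<le> norm y"
      have "c powr s * norm y powr (-(s*\<theta>)) \<le> f y powr s"
        by (rule powr_bound_aux2) (use low[OF y] y R s c in auto)
      also have "f y powr s \<le> g y"
      proof -
        have "0 \<le> f y" using low[OF y] c by (smt (verit) mult_nonneg_nonneg powr_ge_zero)
        thus ?thesis unfolding g_def using s by (intro powr_mono2) auto
      qed
      finally show "c powr s * norm y powr (-(s*\<theta>)) \<le> g y" .
    qed (use c s th st in auto)
    also have "\<dots> \<le> (\<integral>\<^sup>+x. ennreal (g x) \<partial>lborel)"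
      by (intro nn_integral_mono) (auto split: split_indicator)
    finally show ?thesis using X by simp
  qed
  hence le: "real N * \<delta> \<le> X" for N using X(2) by (simp add: ennreal_le_iff)
  obtain N :: nat where "X / \<delta> < real N" using reals_Archimedean2 by blast
  hence "X < real N * \<delta>" using d by (simp add: field_simps)
  thus False using le[of N] by simp
qed



lemma powr_T_bound:
  fixes T M r e :: real
  assumes "0 < T" "T \<le> M * r" "e > 0" "M > 0" "r > 0"
  shows "M powr (-e) * r powr (-e) \<le> T powr (-e)"
proof -
  have "(M * r) powr (-e) \<le> T powr (-e)" using assms by (intro powr_mono2') auto
  thus ?thesis using assms by (simp add: powr_mult)
qed

lemma wolff_base:
  fixes f :: "real^'n::finite \<Rightarrow> real"
  assumes g: "\<gamma> > 1" and nb: "\<beta> * \<gamma> < real CARD('n)"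
    and m0: "0 < (\<integral>\<^sup>+y\<in>ball 0 1. ennreal (f y) \<partial>lborel)"
  shows "\<exists>K>0. \<forall>x. norm x \<ge> 1 \<longrightarrow>
     ennreal (K * norm x powr (-((real CARD('n) - \<beta> * \<gamma>) / (\<gamma> - 1)))) \<le> wolff \<beta> \<gamma> f x"
proof -
  define a where "a = (real CARD('n) - \<beta> * \<gamma>) / (\<gamma> - 1)"
  have a: "a > 0" using g nb by (simp add: a_def)
  obtain C where C: "C > 0" "ennreal C \<le> (\<integral>\<^sup>+y\<in>ball 0 1. ennreal (f y) \<partial>lborel)"
  proof (cases "(\<integral>\<^sup>+y\<in>ball 0 1. ennreal (f y) \<partial>lborel) = \<infinity>")
    case True thus ?thesis using that[of 1] by simp
  next
    case False
    define r where "r = enn2real (\<integral>\<^sup>+y\<in>ball 0 1. ennreal (f y) \<partial>lborel)"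
    have r: "(\<integral>\<^sup>+y\<in>ball 0 1. ennreal (f y) \<partial>lborel) = ennreal r"
      using False by (simp add: r_def less_top)
    have "r > 0" using m0 unfolding r by simp
    thus ?thesis using that[of r] r by simp
  qed
  define K where "K = C powr (1/(\<gamma>-1)) * (2 powr (-a) / a)"
  have K: "K > 0" using C a by (simp add: K_def)
  have "ennreal (K * norm x powr (-a)) \<le> wolff \<beta> \<gamma> f x" if x: "norm x \<ge> 1" for x :: "real^'n"
  proof -
    have "ennreal (C powr (1/(\<gamma>-1)) * ((1 + norm x) powr (-a) / a)) \<le> wolff \<beta> \<gamma> f x"
    proof (rule wolff_lower[OF g C(1) _ _ a])
      show "a = (real CARD('n) - \<beta> * \<gamma> - 0) / (\<gamma> - 1)" by (simp add: a_def)
      fix t assume t: "1 + norm x \<le> t"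
      have "ball (0::real^'n) 1 \<subseteq> ball x t"
      proof
        fix y :: "real^'n" assume "y \<in> ball 0 1"
        hence y: "norm y < 1" by (simp add: dist_norm)
        have "dist x y \<le> norm x + norm y" by (simp add: dist_norm norm_triangle_ineq4)
        thus "y \<in> ball x t" using y t by simp
      qed
      hence "(\<integral>\<^sup>+y\<in>ball 0 1. ennreal (f y) \<partial>lborel) \<le> (\<integral>\<^sup>+y\<in>ball x t. ennreal (f y) \<partial>lborel)"
        by (intro nn_integral_mono) (auto split: split_indicator)
      thus "ennreal (C * t powr 0) \<le> (\<integral>\<^sup>+y\<in>ball x t. ennreal (f y) \<partial>lborel)"
      proof -
        have "t \<noteq> 0" using t norm_ge_zero[of x] by linarith
        hence "t powr 0 = 1" by simp
        thus ?thesis using C(2) \<open>(\<integral>\<^sup>+y\<in>ball 0 1. ennreal (f y) \<partial>lborel) \<le> _\<close> by simp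
      qed
    qed (use x in auto)
    moreover have "K * norm x powr (-a) \<le> C powr (1/(\<gamma>-1)) * ((1 + norm x) powr (-a) / a)"
    proof -
      have "2 powr (-a) * norm x powr (-a) \<le> (1 + norm x) powr (-a)"
        using x a by (intro powr_T_bound) auto
      thus ?thesis using C a unfolding K_def
        by (simp add: divide_right_mono mult_left_mono mult.assoc mult.left_commute mult.commute[of "2 powr (-a)"])
    qed
    ultimately show ?thesis using order_trans ennreal_leI by blast
  qed
  thus ?thesis using K unfolding a_def by blast
qed



lemma annulus_pt:
  fixes t k r :: real
  assumes "t > 0" "t/4 \<le> r" "r < t/2"
  shows "min (4 powr (-k)) (2 powr (-k)) * t powr k \<le> r powr k"
proof (cases "k \<ge> 0")
  case True
  have "(t/4) powr k \<le> r powr k" using assms True by (intro powr_mono2) auto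
  moreover have "(t/4) powr k = 4 powr (-k) * t powr k" using assms by (simp add: powr_divide powr_minus_divide)
  moreover have "min (4 powr (-k)) (2 powr (-k)) * t powr k \<le> 4 powr (-k) * t powr k"
    by (intro mult_right_mono) auto
  ultimately show ?thesis by linarith
next
  case False
  have "(t/2) powr k \<le> r powr k" using assms False by (intro powr_mono2') auto
  moreover have "(t/2) powr k = 2 powr (-k) * t powr k" using assms by (simp add: powr_divide powr_minus_divide)
  moreover have "min (4 powr (-k)) (2 powr (-k)) * t powr k \<le> 2 powr (-k) * t powr k"
    by (intro mult_right_mono) auto
  ultimately show ?thesis by linarith
qed

lemma wolff_annulus:
  fixes f :: "real^'n::finite \<Rightarrow> real"
  assumes g: "\<gamma> > 1" and R: "R > 0" and c: "c > 0" and epos: "e > 0"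
    and e: "e = -(k + \<beta> * \<gamma>) / (\<gamma> - 1)"
    and low: "\<And>y. R \<le> norm y \<Longrightarrow> c * norm y powr k \<le> f y"
  shows "\<exists>K>0. \<forall>x. norm x \<ge> R \<longrightarrow> ennreal (K * norm x powr (-e)) \<le> wolff \<beta> \<gamma> f x"
proof -
  define \<mu> where "\<mu> = min (4 powr (-k)) (2 powr (-k))"
  have mu: "\<mu> > 0" by (simp add: \<mu>_def)
  define D :: real where "D = (1/2) ^ CARD('n) - (1/4) ^ CARD('n)"
  have D: "D > 0" unfolding D_def by (intro power_strict_mono[THEN diff_gt_0_iff_gt[THEN iffD2]]) auto
  define C where "C = c * \<mu> * (omg TYPE('n) * D)"
  have C: "C > 0" using c mu D by (simp add: C_def)
  define K where "K = C powr (1/(\<gamma>-1)) * (8 powr (-e) / e)"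
  have K: "K > 0" using C epos by (simp add: K_def)
  have "ennreal (K * norm x powr (-e)) \<le> wolff \<beta> \<gamma> f x" if x: "norm x \<ge> R" for x :: "real^'n"
  proof -
    have "ennreal (C powr (1/(\<gamma>-1)) * ((4 * (R + norm x)) powr (-e) / e)) \<le> wolff \<beta> \<gamma> f x"
    proof (rule wolff_lower[OF g C _ _ epos])
      show "e = (real CARD('n) - \<beta> * \<gamma> - (k + real CARD('n))) / (\<gamma> - 1)" using e by (simp add: field_simps)
      fix t assume t: "4 * (R + norm x) \<le> t"
      have t0: "t > 0" using t R norm_ge_zero[of x] by (smt (verit))
      have sub: "ball (0::real^'n) (t/2) - ball 0 (t/4) \<subseteq> ball x t"
      proof
        fix y :: "real^'n" assume "y \<in> ball 0 (t/2) - ball 0 (t/4)"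
        hence y: "norm y < t/2" by (simp add: dist_norm)
        have "dist x y \<le> norm x + norm y" by (simp add: dist_norm norm_triangle_ineq4)
        thus "y \<in> ball x t" using y t R norm_ge_zero[of x] norm_ge_zero[of y] by (simp, smt (verit))
      qed
      have "ennreal ((c * \<mu> * t powr k) * (omg TYPE('n) * ((t/2) ^ CARD('n) - (t/4) ^ CARD('n))))
          \<le> (\<integral>\<^sup>+y\<in>ball 0 (t/2) - ball 0 (t/4). ennreal (f y) \<partial>lborel)"
      proof (rule shell_low)
        fix y :: "real^'n" assume y: "t/4 \<le> norm y" "norm y < t/2"
        have "R \<le> norm y" using y t norm_ge_zero[of x] by argo
        hence "c * norm y powr k \<le> f y" by (rule low)
        moreover have "\<mu> * t powr k \<le> norm y powr k" unfolding \<mu>_def by (rule annulus_pt) (use t0 y in auto)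
        ultimately show "c * \<mu> * t powr k \<le> f y" using c by (smt (verit) mult.assoc mult_left_mono)
      qed (use t0 c mu in auto)
      also have "\<dots> \<le> (\<integral>\<^sup>+y\<in>ball x t. ennreal (f y) \<partial>lborel)"
        using sub by (intro nn_integral_mono) (auto split: split_indicator)
      finally have I: "ennreal ((c * \<mu> * t powr k) * (omg TYPE('n) * ((t/2) ^ CARD('n) - (t/4) ^ CARD('n))))
          \<le> (\<integral>\<^sup>+y\<in>ball x t. ennreal (f y) \<partial>lborel)" .
      have "(c * \<mu> * t powr k) * (omg TYPE('n) * ((t/2) ^ CARD('n) - (t/4) ^ CARD('n))) = C * t powr (k + real CARD('n))"
      proof -
        have "(t/2) ^ CARD('n) - (t/4) ^ CARD('n) = t ^ CARD('n) * D"
          by (simp add: D_def power_divide field_simps)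
        moreover have "t powr k * t ^ CARD('n) = t powr (k + real CARD('n))"
          using t0 by (simp add: powr_add powr_realpow)
        ultimately show ?thesis unfolding C_def by (metis (no_types, lifting) mult.assoc mult.commute mult.left_commute)
      qed
      thus "ennreal (C * t powr (k + real CARD('n))) \<le> (\<integral>\<^sup>+y\<in>ball x t. ennreal (f y) \<partial>lborel)"
        using I by simp
    qed (use R norm_ge_zero[of x] in \<open>auto intro!: add_pos_nonneg\<close>)
    moreover have "K * norm x powr (-e) \<le> C powr (1/(\<gamma>-1)) * ((4 * (R + norm x)) powr (-e) / e)"
    proof -
      have "8 powr (-e) * norm x powr (-e) \<le> (4 * (R + norm x)) powr (-e)"
        using x R epos by (intro powr_T_bound) auto
      thus ?thesis using C epos unfolding K_def
        by (simp add: divide_right_mono mult_left_mono mult.assoc mult.left_commute mult.commute[of "8 powr (-e)"])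
    qed
    ultimately show ?thesis using order_trans ennreal_leI by blast
  qed
  thus ?thesis using K by blast
qed

lemma wolff_log:
  fixes f :: "real^'n::finite \<Rightarrow> real"
  assumes g: "\<gamma> > 1" and nb: "\<beta> * \<gamma> < real CARD('n)" and R: "R > 0" and c: "c > 0"
    and fm: "f \<in> borel_measurable borel"
    and low: "\<And>y. R \<le> norm y \<Longrightarrow> c * norm y powr (-real CARD('n)) \<le> f y"
  shows "\<exists>K>0. \<forall>N x. norm x \<ge> 2^N * R \<longrightarrow>
     ennreal (K * real N powr (1/(\<gamma>-1)) * norm x powr (-((real CARD('n) - \<beta> * \<gamma>) / (\<gamma> - 1)))) \<le> wolff \<beta> \<gamma> f x"
proof -
  define a where "a = (real CARD('n) - \<beta> * \<gamma>) / (\<gamma> - 1)"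
  have a: "a > 0" using g nb by (simp add: a_def)
  define \<delta> where "\<delta> = c * (omg TYPE('n) * (2 * R) powr (-real CARD('n)) * R ^ CARD('n) * (2 ^ CARD('n) - 1))"
  have "(2::real) ^ CARD('n) \<ge> 2 ^ 1" by (intro power_increasing) auto
  hence d: "\<delta> > 0" unfolding \<delta>_def using c R by (intro mult_pos_pos) auto
  define K where "K = \<delta> powr (1/(\<gamma>-1)) * (2 powr (-a) / a)"
  have K: "K > 0" using d a by (simp add: K_def)
  have "ennreal (K * real N powr (1/(\<gamma>-1)) * norm x powr (-a)) \<le> wolff \<beta> \<gamma> f x"
    if x: "norm x \<ge> 2^N * R" for N x
  proof (cases "N = 0")
    case True thus ?thesis by simp
  next
    case False
    define C where "C = real N * \<delta>"
    have C: "C > 0" using False d by (simp add: C_def)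
    have "ennreal (C powr (1/(\<gamma>-1)) * ((2^N * R + norm x) powr (-a) / a)) \<le> wolff \<beta> \<gamma> f x"
    proof (rule wolff_lower[OF g C _ _ a])
      show "a = (real CARD('n) - \<beta> * \<gamma> - 0) / (\<gamma> - 1)" by (simp add: a_def)
      fix t assume t: "2^N * R + norm x \<le> t"
      have sub: "ball (0::real^'n) (2^N*R) - ball 0 R \<subseteq> ball x t"
      proof
        fix y :: "real^'n" assume "y \<in> ball 0 (2^N*R) - ball 0 R"
        hence y: "norm y < 2^N*R" by (simp add: dist_norm)
        have "dist x y \<le> norm x + norm y" by (simp add: dist_norm norm_triangle_ineq4)
        thus "y \<in> ball x t" using y t by simp
      qed
      have "ennreal (real N * \<delta>) \<le> (\<integral>\<^sup>+y\<in>ball 0 (2^N*R) - ball 0 R. ennreal (f y) \<partial>lborel)"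
        unfolding \<delta>_def by (rule shells_lower[OF fm R c _ _ low]) auto
      also have "\<dots> \<le> (\<integral>\<^sup>+y\<in>ball x t. ennreal (f y) \<partial>lborel)"
        using sub by (intro nn_integral_mono) (auto split: split_indicator)
      finally have I: "ennreal C \<le> (\<integral>\<^sup>+y\<in>ball x t. ennreal (f y) \<partial>lborel)" by (simp add: C_def)
      have "t > 0" using t R norm_ge_zero[of x] by (smt (verit) zero_less_power mult_pos_pos)
      thus "ennreal (C * t powr 0) \<le> (\<integral>\<^sup>+y\<in>ball x t. ennreal (f y) \<partial>lborel)" using I by simp
    qed (use R in \<open>auto intro!: add_pos_nonneg\<close>)
    moreover have "K * real N powr (1/(\<gamma>-1)) * norm x powr (-a) \<le> C powr (1/(\<gamma>-1)) * ((2^N * R + norm x) powr (-a) / a)"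
    proof -
      have "0 < 2^N * R" using R by simp
      hence h: "2 powr (-a) * norm x powr (-a) \<le> (2^N * R + norm x) powr (-a)"
        using x a by (intro powr_T_bound) auto
      have Ceq: "C powr (1/(\<gamma>-1)) = \<delta> powr (1/(\<gamma>-1)) * real N powr (1/(\<gamma>-1))"
        by (simp add: C_def powr_mult)
      have "K * real N powr (1/(\<gamma>-1)) * norm x powr (-a)
          = (\<delta> powr (1/(\<gamma>-1)) * real N powr (1/(\<gamma>-1))) * (2 powr (-a) * norm x powr (-a)) / a"
        unfolding K_def by (simp add: field_simps)
      also have "\<dots> \<le> (\<delta> powr (1/(\<gamma>-1)) * real N powr (1/(\<gamma>-1))) * ((2^N * R + norm x) powr (-a)) / a"
        by (intro divide_right_mono mult_left_mono h) (use a in auto)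
      also have "\<dots> = C powr (1/(\<gamma>-1)) * ((2^N * R + norm x) powr (-a) / a)" by (simp add: Ceq)
      finally show ?thesis .
    qed
    ultimately show ?thesis using order_trans ennreal_leI by blast
  qed
  thus ?thesis using K unfolding a_def by blast
qed



lemma li_meas:
  fixes f :: "real^'n::finite \<Rightarrow> real"
  assumes "locally_integrable f"
  shows "f \<in> borel_measurable borel"
proof -
  have m: "(\<lambda>x. indicator (cball 0 (real i)) x *\<^sub>R f x) \<in> borel_measurable lborel" for i
  proof -
    have "set_integrable lborel (cball (0::real^'n) (real i)) f"
      using assms unfolding locally_integrable_def by auto
    thus ?thesis unfolding set_integrable_def by (rule borel_measurable_integrable)
  qed
  have "f \<in> borel_measurable lborel"
  proof (rule borel_measurable_LIMSEQ_real[OF _ m])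
    fix x :: "real^'n"
    obtain N :: nat where N: "norm x \<le> real N" using real_arch_simple by blast
    have "eventually (\<lambda>i. indicator (cball 0 (real i)) x *\<^sub>R f x = f x) sequentially"
    proof (rule eventually_sequentiallyI[of N])
      fix i assume "N \<le> i"
      hence "norm x \<le> real i" using N by linarith
      thus "indicator (cball 0 (real i)) x *\<^sub>R f x = f x" by (simp add: dist_norm)
    qed
    thus "(\<lambda>i. indicator (cball 0 (real i)) x *\<^sub>R f x) \<longlonglongrightarrow> f x" by (rule tendsto_eventually)
  qed
  thus ?thesis by simp
qed

lemma ball_int_pos:
  fixes f :: "real^'n::finite \<Rightarrow> real"
  assumes fm: "f \<in> borel_measurable borel" and pos: "\<And>y. y \<noteq> 0 \<Longrightarrow> f y > 0"
  shows "0 < (\<integral>\<^sup>+y\<in>ball 0 1. ennreal (f y) \<partial>lborel)"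
proof (rule ccontr)
  assume "\<not> ?thesis"
  hence "(\<integral>\<^sup>+y. ennreal (f y) * indicator (ball 0 1) y \<partial>lborel) = 0" by (simp add: not_less)
  moreover have mm: "(\<lambda>y. ennreal (f y) * indicator (ball (0::real^'n) 1) y) \<in> borel_measurable lborel"
    using fm by (intro borel_measurable_times_ennreal borel_measurable_indicator) auto
  ultimately have "AE y in lborel. ennreal (f y) * indicator (ball 0 1) y = 0"
    using nn_integral_0_iff_AE[OF mm] by simp
  hence "\<exists>y\<in>ball (0::real^'n) 1 - ball 0 (1/2). ennreal (f y) * indicator (ball 0 1) y = 0"
    by (rule AE_ex) (auto intro!: shell_pos)
  then obtain y :: "real^'n" where y: "norm y < 1" "\<not> norm y < 1/2" "ennreal (f y) = 0"
    by (auto simp: dist_norm)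
  have "y \<noteq> 0" using y(2) by auto
  hence "f y > 0" by (rule pos)
  thus False using y(3) by simp
qed

lemma sol_lower:
  assumes eq: "AE x in lborel. ennreal (u x) = ennreal (c x) * W x"
    and u0: "\<And>x. u x \<ge> 0" and C: "C > 0" and cb: "\<And>x. 1/C \<le> c x"
    and L: "\<And>x. P x \<Longrightarrow> ennreal (L x) \<le> W x" and L0: "\<And>x. L x \<ge> 0"
  shows "AE x in lborel. P x \<longrightarrow> L x / C \<le> u x"
  using eq
proof (rule AE_mp, intro AE_I2 impI)
  fix x assume e: "ennreal (u x) = ennreal (c x) * W x" and P: "P x"
  have "ennreal (L x / C) = ennreal (1/C) * ennreal (L x)"
    using C L0[of x] by (simp add: ennreal_mult[symmetric])
  also have "\<dots> \<le> ennreal (c x) * W x"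
    using cb[of x] L[OF P] by (intro mult_mono ennreal_leI) auto
  finally have "ennreal (L x / C) \<le> ennreal (u x)" using e by simp
  thus "L x / C \<le> u x" using u0[of x] by (simp add: ennreal_le_iff)
qed

lemma pow_cmp:
  fixes e B :: real
  assumes "\<And>\<rho>. \<exists>r \<ge> \<rho>. r > 0 \<and> r powr e \<le> B"
  shows "e \<le> 0"
proof (rule ccontr)
  assume "\<not> e \<le> 0"
  hence e: "e > 0" by simp
  define \<rho> where "\<rho> = max 1 ((\<bar>B\<bar> + 1) powr (1/e))"
  obtain r where r: "r \<ge> \<rho>" "r > 0" "r powr e \<le> B" using assms by blast
  have "\<rho> powr e \<le> r powr e" using r e by (intro powr_mono2) (auto simp: \<rho>_def)
  moreover have "((\<bar>B\<bar> + 1) powr (1/e)) powr e \<le> \<rho> powr e" using e by (intro powr_mono2) (auto simp: \<rho>_def)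
  moreover have "((\<bar>B\<bar> + 1) powr (1/e)) powr e = \<bar>B\<bar> + 1" using e by (simp add: powr_powr)
  ultimately show False using r(3) by linarith
qed

lemma rate_cmp:
  fixes v :: "real^'n::finite \<Rightarrow> real"
  assumes low: "AE x in lborel. \<rho>0 \<le> norm x \<longrightarrow> K * norm x powr (-e) \<le> v x"
    and K: "K > 0" and up: "\<And>x. R \<le> norm x \<Longrightarrow> v x \<le> c * norm x powr (-\<theta>)"
  shows "\<theta> \<le> e"
proof -
  have "\<theta> - e \<le> 0"
  proof (rule pow_cmp[where B = "c / K"])
    fix \<rho>
    obtain x :: "real^'n" where x: "norm x \<ge> max \<rho> (max \<rho>0 (max R 1))" "\<rho>0 \<le> norm x \<longrightarrow> K * norm x powr (-e) \<le> v x"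
      using AE_large[OF low] by blast
    define r where "r = norm x"
    have r: "r > 0" "r \<ge> \<rho>" using x by (auto simp: r_def)
    have h1: "K * r powr (-e) \<le> c * r powr (-\<theta>)" using x up[of x] by (auto simp: r_def)
    have "K * r powr (\<theta> - e) = (K * r powr (-e)) * r powr \<theta>"
      by (simp add: mult.assoc powr_add[symmetric])
    also have "\<dots> \<le> (c * r powr (-\<theta>)) * r powr \<theta>" by (rule mult_right_mono[OF h1]) simp
    also have "\<dots> = c" using r by (simp add: mult.assoc powr_add[symmetric])
    finally have "K * r powr (\<theta> - e) \<le> c" .
    hence "r powr (\<theta> - e) \<le> c / K" using K by (simp add: field_simps)
    thus "\<exists>r \<ge> \<rho>. r > 0 \<and> r powr (\<theta> - e) \<le> c / K" using r by blast
  qed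
  thus ?thesis by simp
qed

lemma asym_bounds:
  assumes "asym_eq u (\<lambda>x. norm x powr (-\<theta>))"
  shows "\<exists>c>0. \<exists>R>0. \<forall>x. R \<le> norm x \<longrightarrow> u x \<le> c * norm x powr (-\<theta>) \<and> (1/c) * norm x powr (-\<theta>) \<le> u x"
proof -
  obtain c R where c: "c > 0" and h: "\<And>x. norm x \<ge> R \<Longrightarrow> 1 / c \<le> u x / norm x powr (-\<theta>) \<and> u x / norm x powr (-\<theta>) \<le> c"
    using assms unfolding asym_eq_def by blast
  have "u x \<le> c * norm x powr (-\<theta>) \<and> (1/c) * norm x powr (-\<theta>) \<le> u x" if x: "max R 1 \<le> norm x" for x
  proof -
    have "norm x \<ge> 1" using x by simp
    hence "x \<noteq> 0" by (metis norm_zero not_one_le_zero)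
    hence p: "norm x powr (-\<theta>) > 0" by simp
    from h[of x] x p show ?thesis by (simp add: field_simps)
  qed
  thus ?thesis using c by (intro exI[of _ c] conjI exI[of _ "max R 1"]) auto
qed

lemma asym_from_bounds:
  fixes u :: "real^'n::finite \<Rightarrow> real"
  assumes c: "c > 0" and R: "R > 0" and h: "\<And>x. R \<le> norm x \<Longrightarrow> u x \<le> c * norm x powr (-\<theta>) \<and> (1/c) * norm x powr (-\<theta>) \<le> u x"
  shows "asym_eq u (\<lambda>x. norm x powr (-\<theta>))"
  unfolding asym_eq_def
proof (rule exI[of _ c], rule conjI[OF c], rule exI[of _ R], intro allI impI)
  fix x :: "real^'n" assume x: "R \<le> norm x"
  have "x \<noteq> 0" using x R by (metis norm_zero not_le)
  hence p: "norm x powr (-\<theta>) > 0" by simp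
  show "1 / c \<le> u x / norm x powr (-\<theta>) \<and> u x / norm x powr (-\<theta>) \<le> c"
    using h[OF x] p c by (simp add: field_simps)
qed

lemma log_contra1:
  fixes d p K :: real
  assumes d: "d > 0" and p: "p > 0" and h: "\<And>\<rho>. \<exists>r \<ge> \<rho>. r > 1 \<and> r powr d \<le> K * ln r powr p"
  shows False
proof -
  have "filterlim (\<lambda>r::real. r powr d / (ln r powr p)) at_top at_top" using d p by real_asymp
  hence "eventually (\<lambda>r. r powr d / (ln r powr p) > K) at_top" by (simp add: filterlim_at_top_dense)
  moreover have "eventually (\<lambda>r::real. r > 1) at_top" by (rule eventually_gt_at_top)
  ultimately obtain \<rho> where \<rho>: "\<And>r. r \<ge> \<rho> \<Longrightarrow> r powr d / (ln r powr p) > K \<and> r > 1"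
    unfolding eventually_at_top_linorder by (metis (mono_tags, lifting) eventually_conj eventually_at_top_linorder)
  obtain r where r: "r \<ge> \<rho>" "r > 1" "r powr d \<le> K * ln r powr p" using h by blast
  have lp: "ln r powr p > 0" using r by simp
  have "K < r powr d / ln r powr p" using \<rho>[OF r(1)] by blast
  hence "K * ln r powr p < r powr d" using lp by (simp only: pos_less_divide_eq)
  thus False using r(3) by simp
qed

lemma log_contra0:
  fixes p K :: real
  assumes p: "p > 0" and h: "\<And>\<rho>. \<exists>r \<ge> \<rho>. r > 1 \<and> ln r powr p \<le> K"
  shows False
proof -
  have "filterlim (\<lambda>r::real. ln r powr p) at_top at_top" using p by real_asymp
  hence "eventually (\<lambda>r. ln r powr p > K) at_top" by (simp add: filterlim_at_top_dense)
  then obtain \<rho> where \<rho>: "\<And>r. r \<ge> \<rho> \<Longrightarrow> ln r powr p > K"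
    unfolding eventually_at_top_linorder by blast
  obtain r where r: "r \<ge> \<rho>" "r > 1" "ln r powr p \<le> K" using h by blast
  thus False using \<rho>[OF r(1)] by simp
qed



lemma mid_aux:
  fixes \<theta> X n :: real
  assumes "0 < \<theta>" "\<theta> < X" "n > 0"
  shows "(n/X + n/\<theta>)/2 > n/X" "(n/X + n/\<theta>)/2 > 0" "(n/X + n/\<theta>)/2 * \<theta> \<le> n"
proof -
  have lt: "n/X < n/\<theta>" using assms by (intro divide_strict_left_mono) auto
  have p: "n/X > 0" using assms by simp
  show "(n/X + n/\<theta>)/2 > n/X" using lt by argo
  show "(n/X + n/\<theta>)/2 > 0" using lt p by argo
  have "(n/X + n/\<theta>)/2 \<le> n/\<theta>" using lt by argo
  hence "(n/X + n/\<theta>)/2 * \<theta> \<le> n/\<theta> * \<theta>" using assms by (intro mult_right_mono) auto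
  thus "(n/X + n/\<theta>)/2 * \<theta> \<le> n" using assms by simp
qed

lemma opt_contra:
  fixes f :: "real^'n::finite \<Rightarrow> real"
  assumes fm: "f \<in> borel_measurable borel" and R: "R > 0" and c: "c > 0"
    and low: "\<And>x. R \<le> norm x \<Longrightarrow> c * norm x powr (-\<theta>) \<le> f x"
    and th: "0 < \<theta>" "\<theta> < X"
    and int: "\<And>s. s > real CARD('n) / X \<Longrightarrow> integrable lborel (\<lambda>x. \<bar>f x\<bar> powr s)"
  shows False
proof -
  define s where "s = (real CARD('n)/X + real CARD('n)/\<theta>)/2"
  have n0: "real CARD('n) > 0" by simp
  note m = mid_aux[OF th n0]
  have "integrable lborel (\<lambda>x. \<bar>f x\<bar> powr s)" using m(1) by (intro int) (simp add: s_def)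
  moreover have "\<not> integrable lborel (\<lambda>x. \<bar>f x\<bar> powr s)"
    by (rule nonint[OF fm R c low]) (use m th in \<open>auto simp: s_def\<close>)
  ultimately show False by simp
qed

lemma fast_int:
  fixes f :: "real^'n::finite \<Rightarrow> real"
  assumes fm: "f \<in> borel_measurable borel" and M: "\<And>x. \<bar>f x\<bar> \<le> M"
    and f0: "\<And>x. f x \<ge> 0"
    and as: "asym_eq f (\<lambda>x. norm x powr (-\<theta>))" and th: "\<theta> > 0"
    and s: "s > real CARD('n) / \<theta>"
  shows "integrable lborel (\<lambda>x. \<bar>f x\<bar> powr s)"
proof -
  obtain c R where c: "c > 0" "R > 0" and b: "\<forall>x. R \<le> norm x \<longrightarrow> f x \<le> c * norm x powr (-\<theta>) \<and> (1/c) * norm x powr (-\<theta>) \<le> f x"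
    using asym_bounds[OF as] by blast
  have s0: "s > 0" using s th by (smt (verit) divide_pos_pos of_nat_0_less_iff zero_less_card_finite)
  have st: "s * \<theta> > real CARD('n)" using s th by (simp add: field_simps)
  show ?thesis
    by (rule int_pos[OF fm M c(2) _ _ s0 st, where C=c]) (use c b f0 in auto)
qed

lemma bounded_range_abs:
  fixes u :: "'a \<Rightarrow> real"
  assumes "bounded (range u)"
  shows "\<exists>M. \<forall>x. \<bar>u x\<bar> \<le> M"
  using assms unfolding bounded_iff by auto



lemma log_alg:
  fixes r a \<theta> L v cL cv :: real
  assumes r: "r > 0" and L: "L > 0" and cL: "cL > 0" and cv: "cv > 0"
    and h1: "1/cL \<le> v / (r powr (-a) * L)" and h2: "v / (r powr (-a) * L) \<le> cL"
    and h3: "v \<le> cv * r powr (-\<theta>)" and h4: "(1/cv) * r powr (-\<theta>) \<le> v"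
  shows "L \<le> cL * cv * r powr (a - \<theta>)" "r powr (a - \<theta>) \<le> cL * cv * L"
proof -
  define g where "g = r powr (-a) * L"
  have g: "g > 0" using r L by (simp add: g_def)
  have h1': "1/cL \<le> v / g" using h1 by (simp add: g_def)
  have "1/cL * g \<le> v" using h1' g by (simp add: le_divide_eq)
  hence "g \<le> cL * v" using cL by (simp add: field_simps)
  also have "\<dots> \<le> cL * (cv * r powr (-\<theta>))" using h3 cL by simp
  finally have A: "r powr (-a) * L \<le> cL * cv * r powr (-\<theta>)" by (simp add: g_def mult.assoc)
  have "L = (r powr (-a) * L) * r powr a" using r by (simp add: powr_minus)
  also have "\<dots> \<le> (cL * cv * r powr (-\<theta>)) * r powr a" by (rule mult_right_mono[OF A]) simp
  also have "\<dots> = cL * cv * r powr (a - \<theta>)" by (simp add: mult.assoc powr_add[symmetric])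
  finally show "L \<le> cL * cv * r powr (a - \<theta>)" .
  have h2': "v / g \<le> cL" using h2 by (simp add: g_def)
  have vg: "v \<le> cL * g" using h2' g by (simp add: divide_le_eq)
  have B0: "r powr (-\<theta>) \<le> cv * v" using h4 cv by (simp add: field_simps)
  have "cv * v \<le> cv * (cL * g)" using vg cv by simp
  hence B: "r powr (-\<theta>) \<le> cv * (cL * g)" using B0 by linarith
  have "r powr (a - \<theta>) = r powr (-\<theta>) * r powr a" by (simp add: powr_add[symmetric])
  also have "\<dots> \<le> (cv * (cL * g)) * r powr a" by (rule mult_right_mono[OF B]) simp
  also have "\<dots> = cL * cv * L" using r by (simp add: g_def powr_minus field_simps)
  finally show "r powr (a - \<theta>) \<le> cL * cv * L" .
qed

theorem theorem5:
  fixes u v c1 c2 :: "real^'n::finite \<Rightarrow> real"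
    and \<beta> \<gamma> p q \<sigma>1 \<sigma>2 :: real
  assumes "CARD('n) \<ge> 3"
    and "\<beta> > 0" and "\<gamma> > 1" and "\<beta> * \<gamma> < real CARD('n)"
    and "p > 0" and "q > 0" and "q \<ge> p" and "p * q > (\<gamma> - 1)\<^sup>2"
    and "\<sigma>1 > - \<beta> * \<gamma>" and "\<sigma>2 > - \<beta> * \<gamma>" and "\<sigma>1 \<le> \<sigma>2"
    and "double_bounded c1" and "double_bounded c2"
    and "q0 \<beta> \<gamma> p q \<sigma>1 \<sigma>2 + p0 \<beta> \<gamma> p q \<sigma>1 \<sigma>2 \<le> (real CARD('n) - \<beta> * \<gamma>) / (\<gamma> - 1)"
    and "is_solution \<beta> \<gamma> p q \<sigma>1 \<sigma>2 c1 c2 u v"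
    and "bounded (range u)" and "bounded (range v)"
    and "decaying u v"
  shows "optimal_integrable \<beta> \<gamma> p \<sigma>2 u v \<longleftrightarrow> fast_rates \<beta> \<gamma> p \<sigma>2 u v"
proof -
  have g: "\<gamma> > 1" by (rule assms(3))
  have nb: "\<beta> * \<gamma> < real CARD('n)" by (rule assms(4))
  have p0: "p > 0" by (rule assms(5))
  define n where "n = real CARD('n)"
  have n0: "n > 0" by (simp add: n_def)
  define a where "a = (real CARD('n) - \<beta> * \<gamma>) / (\<gamma> - 1)"
  have a0: "a > 0" using g nb by (simp add: a_def)
  have thr: "real CARD('n) * (\<gamma> - 1) / (real CARD('n) - \<beta> * \<gamma>) = n / a"
    using g nb by (simp add: a_def n_def field_simps)
  from assms(15) have u0: "\<And>x. u x \<ge> 0" and v0: "\<And>x. v x \<ge> 0"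
    and liu: "locally_integrable u" and liv: "locally_integrable v"
    and eqU: "AE x in lborel. ennreal (u x) = ennreal (c1 x) * wolff \<beta> \<gamma> (\<lambda>y. norm y powr \<sigma>1 * v y powr q) x"
    and eqV: "AE x in lborel. ennreal (v x) = ennreal (c2 x) * wolff \<beta> \<gamma> (\<lambda>y. norm y powr \<sigma>2 * u y powr p) x"
    unfolding is_solution_def by auto
  have um[measurable]: "u \<in> borel_measurable borel" by (rule li_meas[OF liu])
  have vm[measurable]: "v \<in> borel_measurable borel" by (rule li_meas[OF liv])
  from assms(18) obtain \<theta>1 \<theta>2 where upos: "\<And>x. u x > 0" and vpos: "\<And>x. v x > 0"
    and th1p: "\<theta>1 > 0" and th2p: "\<theta>2 > 0"
    and asu: "asym_eq u (\<lambda>x. norm x powr (-\<theta>1))" and asv: "asym_eq v (\<lambda>x. norm x powr (-\<theta>2))"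
    unfolding decaying_def by blast
  obtain cu Ru where cu: "cu > 0" and Ru: "Ru > 0"
    and ub: "\<forall>x. Ru \<le> norm x \<longrightarrow> u x \<le> cu * norm x powr (-\<theta>1) \<and> (1/cu) * norm x powr (-\<theta>1) \<le> u x"
    using asym_bounds[OF asu] by blast
  obtain cv Rv where cv: "cv > 0" and Rv: "Rv > 0"
    and vb: "\<forall>x. Rv \<le> norm x \<longrightarrow> v x \<le> cv * norm x powr (-\<theta>2) \<and> (1/cv) * norm x powr (-\<theta>2) \<le> v x"
    using asym_bounds[OF asv] by blast
  obtain C1 where C1: "C1 > 0" and cb1: "\<And>x. 1/C1 \<le> c1 x"
    using assms(12) unfolding double_bounded_def by blast
  obtain C2 where C2: "C2 > 0" and cb2: "\<And>x. 1/C2 \<le> c2 x"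
    using assms(13) unfolding double_bounded_def by blast
  obtain Mu where Mu: "\<And>x. \<bar>u x\<bar> \<le> Mu" using bounded_range_abs[OF assms(16)] by blast
  obtain Mv where Mv: "\<And>x. \<bar>v x\<bar> \<le> Mv" using bounded_range_abs[OF assms(17)] by blast
  define f1 where "f1 = (\<lambda>y::real^'n. norm y powr \<sigma>1 * v y powr q)"
  define f2 where "f2 = (\<lambda>y::real^'n. norm y powr \<sigma>2 * u y powr p)"
  have f1m: "f1 \<in> borel_measurable borel" unfolding f1_def by measurable
  have f2m: "f2 \<in> borel_measurable borel" unfolding f2_def by measurable
  have f1pos: "f1 y > 0" if y: "y \<noteq> 0" for y
  proof -
    have "norm y powr \<sigma>1 > 0" "v y powr q > 0" using y vpos[of y] by auto
    thus ?thesis by (simp add: f1_def)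
  qed
  have f2pos: "f2 y > 0" if y: "y \<noteq> 0" for y
  proof -
    have "norm y powr \<sigma>2 > 0" "u y powr p > 0" using y upos[of y] by auto
    thus ?thesis by (simp add: f2_def)
  qed
  have eqU': "AE x in lborel. ennreal (u x) = ennreal (c1 x) * wolff \<beta> \<gamma> f1 x" using eqU by (simp add: f1_def)
  have eqV': "AE x in lborel. ennreal (v x) = ennreal (c2 x) * wolff \<beta> \<gamma> f2 x" using eqV by (simp add: f2_def)
  obtain K1 where K1: "K1 > 0" and W1: "\<forall>x. norm x \<ge> 1 \<longrightarrow> ennreal (K1 * norm x powr (-a)) \<le> wolff \<beta> \<gamma> f1 x"
    using wolff_base[OF g nb ball_int_pos[OF f1m f1pos]] unfolding a_def by blast
  obtain K2 where K2: "K2 > 0" and W2: "\<forall>x. norm x \<ge> 1 \<longrightarrow> ennreal (K2 * norm x powr (-a)) \<le> wolff \<beta> \<gamma> f2 x"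
    using wolff_base[OF g nb ball_int_pos[OF f2m f2pos]] unfolding a_def by blast
  have lowU: "AE x in lborel. 1 \<le> norm x \<longrightarrow> K1 / C1 * norm x powr (-a) \<le> u x"
  proof -
    have "AE x in lborel. 1 \<le> norm x \<longrightarrow> K1 * norm x powr (-a) / C1 \<le> u x"
      by (rule sol_lower[OF eqU' u0 C1 cb1]) (use W1 K1 in auto)
    thus ?thesis by (rule eventually_mono) simp
  qed
  have lowV: "AE x in lborel. 1 \<le> norm x \<longrightarrow> K2 / C2 * norm x powr (-a) \<le> v x"
  proof -
    have "AE x in lborel. 1 \<le> norm x \<longrightarrow> K2 * norm x powr (-a) / C2 \<le> v x"
      by (rule sol_lower[OF eqV' v0 C2 cb2]) (use W2 K2 in auto)
    thus ?thesis by (rule eventually_mono) simp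
  qed
  have th1a: "\<theta>1 \<le> a"
    by (rule rate_cmp[OF lowU _, where R=Ru and c=cu]) (use K1 C1 ub in auto)
  have th2a: "\<theta>2 \<le> a"
    by (rule rate_cmp[OF lowV _, where R=Rv and c=cv]) (use K2 C2 vb in auto)

  have f2low: "cf * norm y powr (\<sigma>2 - p * a) \<le> f2 y" if y: "Ru \<le> norm y" and ubA: "\<And>x. Ru \<le> norm x \<Longrightarrow> (1/cu) * norm x powr (-a) \<le> u x" and cfd: "cf = (1/cu) powr p" for y cf
  proof -
    have yp: "norm y > 0" using y Ru by linarith
    have "(1/cu) powr p * norm y powr (-(p*a)) \<le> u y powr p"
      by (rule powr_bound_aux2) (use ubA[OF y] yp p0 cu in auto)
    hence "norm y powr \<sigma>2 * ((1/cu) powr p * norm y powr (-(p*a))) \<le> norm y powr \<sigma>2 * u y powr p"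
      by (intro mult_left_mono) auto
    moreover have "norm y powr \<sigma>2 * ((1/cu) powr p * norm y powr (-(p*a))) = cf * norm y powr (\<sigma>2 - p * a)"
      using yp by (simp add: cfd powr_add[symmetric] mult_ac)
    ultimately show ?thesis by (simp add: f2_def)
  qed
  show ?thesis
  proof
    assume opt: "optimal_integrable \<beta> \<gamma> p \<sigma>2 u v"
    have O1: "\<forall>r. r > real CARD('n) * (\<gamma> - 1) / (real CARD('n) - \<beta> * \<gamma>) \<longrightarrow> integrable lborel (\<lambda>x. \<bar>u x\<bar> powr r)"
      using opt unfolding optimal_integrable_def Let_def by blast
    have O2: "\<forall>s. s > max (real CARD('n) * (\<gamma> - 1) / (real CARD('n) - \<beta> * \<gamma>)) (real CARD('n) * (\<gamma> - 1) / (p * a - (\<beta> * \<gamma> + \<sigma>2))) \<longrightarrow> integrable lborel (\<lambda>x. \<bar>v x\<bar> powr s)"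
      using opt unfolding optimal_integrable_def Let_def a_def by blast
    have optU: "integrable lborel (\<lambda>x. \<bar>u x\<bar> powr r)" if hr: "r > n / a" for r
    proof -
      have "r > real CARD('n) * (\<gamma> - 1) / (real CARD('n) - \<beta> * \<gamma>)" using hr thr by (simp add: n_def)
      thus ?thesis using O1 by blast
    qed
    have optV: "integrable lborel (\<lambda>x. \<bar>v x\<bar> powr s)"
      if hs: "s > max (n / a) (n * (\<gamma> - 1) / (p * a - (\<beta> * \<gamma> + \<sigma>2)))" for s
    proof -
      have "s > max (real CARD('n) * (\<gamma> - 1) / (real CARD('n) - \<beta> * \<gamma>)) (real CARD('n) * (\<gamma> - 1) / (p * a - (\<beta> * \<gamma> + \<sigma>2)))"
        using hs thr by (simp add: n_def)
      thus ?thesis using O2 by blast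
    qed
    have th1: "\<theta>1 = a"
    proof (rule ccontr)
      assume "\<theta>1 \<noteq> a"
      hence "\<theta>1 < a" using th1a by simp
      show False
        by (rule opt_contra[OF um Ru _ _ th1p \<open>\<theta>1 < a\<close>, where c="1/cu"]) (use cu ub optU n_def in auto)
    qed
    have ubA: "\<And>x. Ru \<le> norm x \<Longrightarrow> (1/cu) * norm x powr (-a) \<le> u x" using ub th1 by simp
    have uFast: "asym_eq u (\<lambda>x. norm x powr (-a))" using asu th1 by simp
    define cf where "cf = (1/cu) powr p"
    have cf0: "cf > 0" using cu by (simp add: cf_def)
    have f2l: "\<And>y. Ru \<le> norm y \<Longrightarrow> cf * norm y powr (\<sigma>2 - p * a) \<le> f2 y"
      using f2low[OF _ ubA cf_def] by blast
    have th2_ge: "a \<le> \<theta>2" if sec: "n * (\<gamma> - 1) / (p * a - (\<beta> * \<gamma> + \<sigma>2)) \<le> n / a"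
    proof (rule ccontr)
      assume "\<not> a \<le> \<theta>2"
      hence "\<theta>2 < a" by simp
      show False
        by (rule opt_contra[OF vm Rv _ _ th2p \<open>\<theta>2 < a\<close>, where c="1/cv"]) (use cv vb optV sec n_def in auto)
    qed
    consider (gt) "p * a - \<sigma>2 > n" | (eq) "p * a - \<sigma>2 = n" | (lt) "p * a - \<sigma>2 < n" by linarith
    thus "fast_rates \<beta> \<gamma> p \<sigma>2 u v"
    proof cases
      case gt
      have "n * (\<gamma> - 1) / (p * a - (\<beta> * \<gamma> + \<sigma>2)) \<le> n / a"
      proof -
        have "n - \<beta> * \<gamma> > 0" using nb n_def by simp
        hence "n * (\<gamma> - 1) / (p * a - (\<beta> * \<gamma> + \<sigma>2)) \<le> n * (\<gamma> - 1) / (n - \<beta> * \<gamma>)"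
          using gt g n0 by (intro divide_left_mono) auto
        thus ?thesis using thr n_def by simp
      qed
      hence th2: "\<theta>2 = a" using th2_ge th2a by simp
      show ?thesis unfolding fast_rates_def Let_def a_def[symmetric]
        using uFast asv th2 gt n_def by auto
    next
      case eq
      have "n * (\<gamma> - 1) / (p * a - (\<beta> * \<gamma> + \<sigma>2)) = n / a"
      proof -
        have D: "p * a - (\<beta> * \<gamma> + \<sigma>2) = real CARD('n) - \<beta> * \<gamma>" using eq n_def by simp
        show ?thesis unfolding D using thr n_def by simp
      qed
      hence th2: "\<theta>2 = a" using th2_ge th2a by simp
      have f2l': "\<And>y. Ru \<le> norm y \<Longrightarrow> cf * norm y powr (-real CARD('n)) \<le> f2 y"
        using f2l eq n_def by (smt (verit))
      obtain K0 where K0: "K0 > 0" and W0: "\<forall>N x. norm x \<ge> 2^N * Ru \<longrightarrow>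
         ennreal (K0 * real N powr (1/(\<gamma>-1)) * norm x powr (-a)) \<le> wolff \<beta> \<gamma> f2 x"
        using wolff_log[OF g nb Ru cf0 f2m f2l'] unfolding a_def by blast
      define X where "X = cv * C2 / K0"
      have X0: "X \<ge> 0" using cv C2 K0 by (simp add: X_def)
      define N :: nat where "N = nat \<lceil>(X + 1) powr (\<gamma> - 1)\<rceil>"
      have "real N \<ge> (X + 1) powr (\<gamma> - 1)" unfolding N_def by linarith
      hence "real N powr (1/(\<gamma>-1)) \<ge> ((X + 1) powr (\<gamma> - 1)) powr (1/(\<gamma>-1))"
        using g by (intro powr_mono2) auto
      hence NX: "real N powr (1/(\<gamma>-1)) \<ge> X + 1" using g X0 by (simp add: powr_powr)
      have lowN: "AE x in lborel. 2^N * Ru \<le> norm x \<longrightarrow> K0 * real N powr (1/(\<gamma>-1)) * norm x powr (-a) / C2 \<le> v x"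
        by (rule sol_lower[OF eqV' v0 C2 cb2]) (use W0 K0 in auto)
      obtain x :: "real^'n" where x: "norm x \<ge> max (2^N * Ru) (max Rv 1)"
        and xl: "2^N * Ru \<le> norm x \<longrightarrow> K0 * real N powr (1/(\<gamma>-1)) * norm x powr (-a) / C2 \<le> v x"
        using AE_large[OF lowN] by blast
      have xp: "norm x powr (-a) > 0" using x by auto
      have h1: "K0 * real N powr (1/(\<gamma>-1)) * norm x powr (-a) / C2 \<le> cv * norm x powr (-a)"
        using xl x vb th2 by force
      have h2: "K0 * real N powr (1/(\<gamma>-1)) * norm x powr (-a) / C2 = (K0 * real N powr (1/(\<gamma>-1)) / C2) * norm x powr (-a)"
        by simp
      have "(K0 * real N powr (1/(\<gamma>-1)) / C2) * norm x powr (-a) \<le> cv * norm x powr (-a)"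
        using h1 unfolding h2 .
      hence "K0 * real N powr (1/(\<gamma>-1)) / C2 \<le> cv" using xp by (rule mult_right_le_imp_le)
      hence "real N powr (1/(\<gamma>-1)) \<le> X" using K0 C2 by (simp add: X_def field_simps)
      hence False using NX by simp
      thus ?thesis ..
    next
      case lt
      define b where "b = (p * a - (\<beta> * \<gamma> + \<sigma>2)) / (\<gamma> - 1)"
      have ba: "b < a" using lt g by (simp add: b_def a_def n_def divide_strict_right_mono)
      show ?thesis
      proof (cases "b > 0")
        case False
        define \<epsilon> where "\<epsilon> = min \<theta>2 a / 2"
        have e0: "\<epsilon> > 0" using th2p a0 by (simp add: \<epsilon>_def)
        have e2: "\<epsilon> < \<theta>2" using th2p by (simp add: \<epsilon>_def)
        define k' where "k' = - (\<beta> * \<gamma>) - \<epsilon> * (\<gamma> - 1)"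
        have kk: "k' \<le> \<sigma>2 - p * a"
        proof -
          have "p * a - (\<beta> * \<gamma> + \<sigma>2) \<le> 0"
          proof (rule ccontr)
            assume "\<not> p * a - (\<beta> * \<gamma> + \<sigma>2) \<le> 0"
            hence "p * a - (\<beta> * \<gamma> + \<sigma>2) > 0" by simp
            hence "b > 0" using g by (simp add: b_def)
            thus False using False by simp
          qed
          moreover have "\<epsilon> * (\<gamma> - 1) > 0" using e0 g by simp
          ultimately show ?thesis by (simp add: k'_def)
        qed
        have low': "cf * norm y powr k' \<le> f2 y" if y: "max Ru 1 \<le> norm y" for y
        proof -
          have "norm y powr k' \<le> norm y powr (\<sigma>2 - p * a)" using y kk by (intro powr_mono) auto
          hence "cf * norm y powr k' \<le> cf * norm y powr (\<sigma>2 - p * a)" using cf0 by simp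
          thus ?thesis using f2l[of y] y by simp
        qed
        have "\<exists>K>0. \<forall>x. norm x \<ge> max Ru 1 \<longrightarrow> ennreal (K * norm x powr (-\<epsilon>)) \<le> wolff \<beta> \<gamma> f2 x"
        proof (rule wolff_annulus[where R="max Ru 1" and k=k' and c=cf])
          show "\<epsilon> = - (k' + \<beta> * \<gamma>) / (\<gamma> - 1)" using g by (simp add: k'_def field_simps)
        qed (use g Ru cf0 e0 low' in auto)
        then obtain Ke where Ke: "Ke > 0" and We: "\<forall>x. norm x \<ge> max Ru 1 \<longrightarrow> ennreal (Ke * norm x powr (-\<epsilon>)) \<le> wolff \<beta> \<gamma> f2 x"
          by blast
        have lowe: "AE x in lborel. max Ru 1 \<le> norm x \<longrightarrow> Ke / C2 * norm x powr (-\<epsilon>) \<le> v x"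
        proof -
          have "AE x in lborel. max Ru 1 \<le> norm x \<longrightarrow> Ke * norm x powr (-\<epsilon>) / C2 \<le> v x"
            by (rule sol_lower[OF eqV' v0 C2 cb2]) (use We Ke in auto)
          thus ?thesis by (rule eventually_mono) simp
        qed
        have "\<theta>2 \<le> \<epsilon>"
          by (rule rate_cmp[OF lowe _, where R=Rv and c=cv]) (use Ke C2 vb in auto)
        thus ?thesis using e2 by simp
      next
        case True
        have "\<exists>K>0. \<forall>x. norm x \<ge> Ru \<longrightarrow> ennreal (K * norm x powr (-b)) \<le> wolff \<beta> \<gamma> f2 x"
        proof (rule wolff_annulus[where R=Ru and k="\<sigma>2 - p * a" and c=cf])
          show "b = - (\<sigma>2 - p * a + \<beta> * \<gamma>) / (\<gamma> - 1)" using g by (simp add: b_def field_simps)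
        qed (use g Ru cf0 True f2l in auto)
        then obtain Kb where Kb: "Kb > 0" and Wb: "\<forall>x. norm x \<ge> Ru \<longrightarrow> ennreal (Kb * norm x powr (-b)) \<le> wolff \<beta> \<gamma> f2 x"
          by blast
        have lowb: "AE x in lborel. Ru \<le> norm x \<longrightarrow> Kb / C2 * norm x powr (-b) \<le> v x"
        proof -
          have "AE x in lborel. Ru \<le> norm x \<longrightarrow> Kb * norm x powr (-b) / C2 \<le> v x"
            by (rule sol_lower[OF eqV' v0 C2 cb2]) (use Wb Kb in auto)
          thus ?thesis by (rule eventually_mono) simp
        qed
        have th2b: "\<theta>2 \<le> b"
          by (rule rate_cmp[OF lowb _, where R=Rv and c=cv]) (use Kb C2 vb in auto)
        have secb: "n * (\<gamma> - 1) / (p * a - (\<beta> * \<gamma> + \<sigma>2)) = n / b"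
          using True g by (simp add: b_def)
        have ab: "n / a < n / b" using ba True n0 by (intro divide_strict_left_mono) auto
        have th2: "\<theta>2 = b"
        proof (rule ccontr)
          assume "\<theta>2 \<noteq> b"
          hence "\<theta>2 < b" using th2b by simp
          show False
            by (rule opt_contra[OF vm Rv _ _ th2p \<open>\<theta>2 < b\<close>, where c="1/cv"])
              (use cv vb optV secb ab n_def in auto)
        qed
        show ?thesis unfolding fast_rates_def Let_def a_def[symmetric] b_def[symmetric]
          using uFast asv th2 lt n_def by auto
      qed
    qed
  next
    assume fast: "fast_rates \<beta> \<gamma> p \<sigma>2 u v"
    have F: "asym_eq u (\<lambda>x. norm x powr (-a)) \<and>
      (p * a - \<sigma>2 > real CARD('n) \<longrightarrow> asym_eq v (\<lambda>x. norm x powr (-a))) \<and>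
      (p * a - \<sigma>2 = real CARD('n) \<longrightarrow> asym_eq v (\<lambda>x. norm x powr (-a) * ln (norm x) powr (1 / (\<gamma> - 1)))) \<and>
      (p * a - \<sigma>2 < real CARD('n) \<longrightarrow> asym_eq v (\<lambda>x. norm x powr (-((p * a - (\<beta> * \<gamma> + \<sigma>2)) / (\<gamma> - 1)))))"
      using fast unfolding fast_rates_def Let_def a_def by blast
    have FU: "asym_eq u (\<lambda>x. norm x powr (-a))" using F by blast
    show "optimal_integrable \<beta> \<gamma> p \<sigma>2 u v"
      unfolding optimal_integrable_def Let_def a_def[symmetric]
    proof (intro conjI allI impI)
      fix r assume "real CARD('n) * (\<gamma> - 1) / (real CARD('n) - \<beta> * \<gamma>) < r"
      hence "r > real CARD('n) / a" using thr n_def by simp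
      thus "integrable lborel (\<lambda>x. \<bar>u x\<bar> powr r)" by (rule fast_int[OF um Mu u0 FU a0])
    next
      fix s assume hs: "max (real CARD('n) * (\<gamma> - 1) / (real CARD('n) - \<beta> * \<gamma>))
        (real CARD('n) * (\<gamma> - 1) / (p * a - (\<beta> * \<gamma> + \<sigma>2))) < s"
      have sa: "s > real CARD('n) / a" using hs thr n_def by simp
      have sb: "s > real CARD('n) * (\<gamma> - 1) / (p * a - (\<beta> * \<gamma> + \<sigma>2))" using hs by simp
      consider (gt) "p * a - \<sigma>2 > real CARD('n)" | (eq) "p * a - \<sigma>2 = real CARD('n)" | (lt) "p * a - \<sigma>2 < real CARD('n)" by linarith
      thus "integrable lborel (\<lambda>x. \<bar>v x\<bar> powr s)"
      proof cases
        case gt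
        hence "asym_eq v (\<lambda>x. norm x powr (-a))" using F by blast
        thus ?thesis using sa by (rule fast_int[OF vm Mv v0 _ a0])
      next
        case eq
        hence asL: "asym_eq v (\<lambda>x. norm x powr (-a) * ln (norm x) powr (1 / (\<gamma> - 1)))" using F by blast
        then obtain cL RL where cL: "cL > 0" and hL: "\<And>x. norm x \<ge> RL \<Longrightarrow>
            1 / cL \<le> v x / (norm x powr (-a) * ln (norm x) powr (1 / (\<gamma> - 1))) \<and>
            v x / (norm x powr (-a) * ln (norm x) powr (1 / (\<gamma> - 1))) \<le> cL"
          unfolding asym_eq_def by blast
        have P: "1 / (\<gamma> - 1) > 0" using g by simp
        have pts: "\<exists>r \<ge> \<rho>. r > 1 \<and> ln r powr (1 / (\<gamma> - 1)) \<le> cL * cv * r powr (a - \<theta>2) \<and> r powr (a - \<theta>2) \<le> cL * cv * ln r powr (1 / (\<gamma> - 1))" for \<rho>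
        proof -
          obtain x :: "real^'n" where x: "norm x \<ge> max \<rho> (max RL (max Rv 2))"
            using AE_large[of "\<lambda>x. True"] by blast
          define r where "r = norm x"
          have r: "r > 1" "r \<ge> \<rho>" using x by (auto simp: r_def)
          have L: "ln r powr (1 / (\<gamma> - 1)) > 0" using r by simp
          have "norm x \<ge> RL" using x by simp
          hence hx: "1 / cL \<le> v x / (r powr (-a) * ln r powr (1 / (\<gamma> - 1)))"
            "v x / (r powr (-a) * ln r powr (1 / (\<gamma> - 1))) \<le> cL"
            using hL unfolding r_def by auto
          have "Rv \<le> norm x" using x by simp
          hence vx: "v x \<le> cv * r powr (-\<theta>2)" "(1/cv) * r powr (-\<theta>2) \<le> v x"
            using vb unfolding r_def by auto
          have r0: "r > 0" using r by simp
          note la = log_alg[OF r0 L cL cv hx(1) hx(2) vx(1) vx(2)]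
          show ?thesis using la r by blast
        qed
        have "\<theta>2 = a \<or> \<theta>2 < a" using th2a by auto
        hence False
        proof
          assume e: "\<theta>2 = a"
          show False
          proof (rule log_contra0[OF P, of "cL * cv"])
            fix \<rho> :: real
            obtain r where r: "r \<ge> \<rho>" "r > 1" "ln r powr (1 / (\<gamma> - 1)) \<le> cL * cv * r powr (a - \<theta>2)"
              using pts[of \<rho>] by blast
            thus "\<exists>r \<ge> \<rho>. r > 1 \<and> ln r powr (1 / (\<gamma> - 1)) \<le> cL * cv" using e by auto
          qed
        next
          assume e: "\<theta>2 < a"
          have d: "a - \<theta>2 > 0" using e by simp
          show False
          proof (rule log_contra1[OF d P, of "cL * cv"])
            fix \<rho> :: real
            show "\<exists>r \<ge> \<rho>. r > 1 \<and> r powr (a - \<theta>2) \<le> cL * cv * ln r powr (1 / (\<gamma> - 1))"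
              using pts[of \<rho>] by blast
          qed
        qed
        thus ?thesis ..
      next
        case lt
        define b where "b = (p * a - (\<beta> * \<gamma> + \<sigma>2)) / (\<gamma> - 1)"
        have asb: "asym_eq v (\<lambda>x. norm x powr (-b))" using F lt unfolding b_def by blast
        obtain cb Rb where cb: "cb > 0" and Rb: "Rb > 0"
          and bb: "\<forall>x. Rb \<le> norm x \<longrightarrow> v x \<le> cb * norm x powr (-b) \<and> (1/cb) * norm x powr (-b) \<le> v x"
          using asym_bounds[OF asb] by blast
        have l2: "AE x in lborel. Rv \<le> norm x \<longrightarrow> (1/cv) * norm x powr (-\<theta>2) \<le> v x"
          using vb by (intro AE_I2) auto
        have lb: "AE x in lborel. Rb \<le> norm x \<longrightarrow> (1/cb) * norm x powr (-b) \<le> v x"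
          using bb by (intro AE_I2) auto
        have "b \<le> \<theta>2" by (rule rate_cmp[OF l2 _, where R=Rb and c=cb]) (use cv bb in auto)
        moreover have "\<theta>2 \<le> b" by (rule rate_cmp[OF lb _, where R=Rv and c=cv]) (use cb vb in auto)
        ultimately have th2: "\<theta>2 = b" by simp
        hence b0: "b > 0" using th2p by simp
        have "p * a - (\<beta> * \<gamma> + \<sigma>2) > 0" using b0 g by (simp add: b_def zero_less_divide_iff)
        hence "real CARD('n) * (\<gamma> - 1) / (p * a - (\<beta> * \<gamma> + \<sigma>2)) = real CARD('n) / b"
          using g by (simp add: b_def)
        hence "s > real CARD('n) / b" using sb by simp
        thus ?thesis by (rule fast_int[OF vm Mv v0 asb b0])
      qed
    qed
  qed
qed


end
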